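(* In the setting of the context: (i) for every $C<0$, $\lim_{R\to+\infty}\mu_{\mathrm{A}}(B^{C,+}_{\mathfrak{a}}(R))/\mu_{\mathrm{A}}(B^+_{\mathfrak{a}}(R))=1$; (ii) for every $\varepsilon\in(0,1)$ there exists $\delta_\varepsilon>0$ such that $\limsup_{R\to+\infty}\mu_{\mathrm{A}}(B^+_{\mathfrak{a}}(R))/\mu_{\mathrm{A}}(B^+_{\mathfrak{a}}(R,\delta_\varepsilon))\le\min\{1+\varepsilon,\frac{1}{1-\varepsilon}\}$.
   Context: $N\ge2$; traceless real diagonal matrices form $\mathfrak{a}$ with norm from $\mathrm{Tr}(XY^T)$. $\mathscr{I}_0=\{I_1,\dots,I_{k_0}\}$: partition of $\{1,\dots,N\}$ into nonempty consecutive blocks; $i\sim j$ iff same block. $\mathfrak{a}_{\mathscr{I}_0}$: elements of $\mathfrak{a}$ constant on blocks, written $\mathrm{diag}(c_1\mathrm{id}_{|I_1|},\dots,c_{k_0}\mathrm{id}_{|I_{k_0}|})$; $\mathfrak{a}^+_{\mathscr{I}_0}$: those with $\sum_{s\le k}c_s|I_s|\ge0$ for $k<k_0$. $\mathfrak{a}_{\mathrm{M}_{\mathscr{I}_0}}$: elements of $\mathfrak{a}$ with zero trace on each block; $\mathfrak{a}^+_{\mathrm{M}_{\mathscr{I}_0}}$: those with $x_i\ge x_j$ for $i<j$, $i\sim j$. $\mu_{\mathrm{A}}$ is the measure on $\mathfrak{a}^+_{\mathrm{M}_{\mathscr{I}_0}}\times\mathfrak{a}_{\mathscr{I}_0}$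 with density $\prod_{i<j,i\sim j}\frac{e^{x_i-x_j}-e^{x_j-x_i}}{2}\cdot\prod_{i<j,i\not\sim j}e^{y_i-y_j}$ at $(x,y)$ with respect to the Lebesgue measure induced by the trace-form inner product. $B_{\mathfrak{a}}(R):=\{(x,y)\in\mathfrak{a}^+_{\mathrm{M}_{\mathscr{I}_0}}\times\mathfrak{a}_{\mathscr{I}_0}:\|x+y\|\le R\}$, $B^+_{\mathfrak{a}}(R):=B_{\mathfrak{a}}(R)\cap(\mathfrak{a}^+_{\mathrm{M}_{\mathscr{I}_0}}\times\mathfrak{a}^+_{\mathscr{I}_0})$, $B^+_{\mathfrak{a}}(R,\delta):=B^+_{\mathfrak{a}}(R)\setminus B^+_{\mathfrak{a}}(\delta R)$. For $C\in\mathbb{R}$, $\mathcal{C}_C$ is the set of $\mathrm{diag}(z_1,\dots,z_N)\in\mathfrak{a}$ with $z_i-z_j\ge\max\{0,C\}$ for $i<j$ in the same block and $\sum_{i\in I_1\cup\dots\cup I_k}z_i\ge C$ for $1\le k<k_0$; $B^{C,+}_{\mathfrak{a}}(R):=\{(x,y)\in B_{\mathfrak{a}}(R):x+y\in\mathcal{C}_C\}$. *)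

theory Defs
  imports "HOL-Analysis.Analysis"
begin

text \<open>Indices are 0-based: a diagonal matrix diag(z_1,...,z_N) is represented
  by a function z :: nat => real with z i the (i+1)-th diagonal entry for i < N and z i = 0
  for i >= N. The partition into consecutive nonempty blocks I_1,...,I_k0 is given by the list
  ns of block sizes (ns ! s = |I_(s+1)|), so k0 = length ns and N = sum_list ns.\<close>

definition cut :: "nat list \<Rightarrow> nat \<Rightarrow> nat" where
  "cut ns k = sum_list (take k ns)"

definition blk :: "nat list \<Rightarrow> nat \<Rightarrow> nat set" where
  "blk ns s = {cut ns s ..< cut ns (Suc s)}"

definition valid_partition :: "nat list \<Rightarrow> nat \<Rightarrow> bool" where
  "valid_partition ns N \<longleftrightarrow> (\<forall>n\<in>set ns. 0 < n) \<and> sum_list ns = N"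

definition same_blk :: "nat list \<Rightarrow> nat \<Rightarrow> nat \<Rightarrow> bool" where
  "same_blk ns i j \<longleftrightarrow> (\<exists>s<length ns. i \<in> blk ns s \<and> j \<in> blk ns s)"

definition afrak :: "nat \<Rightarrow> (nat \<Rightarrow> real) set" where
  "afrak N = {z. (\<forall>i\<ge>N. z i = 0) \<and> (\<Sum>i<N. z i) = 0}"

text \<open>Norm from the trace form Tr(X Y^T).\<close>
definition anorm :: "nat \<Rightarrow> (nat \<Rightarrow> real) \<Rightarrow> real" where
  "anorm N z = sqrt (\<Sum>i<N. (z i)\<^sup>2)"

definition aI :: "nat list \<Rightarrow> (nat \<Rightarrow> real) set" where
  "aI ns = {y \<in> afrak (sum_list ns). \<forall>i j. same_blk ns i j \<longrightarrow> y i = y j}"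

definition aplusI :: "nat list \<Rightarrow> (nat \<Rightarrow> real) set" where
  "aplusI ns = {y \<in> aI ns. \<forall>k. 1 \<le> k \<and> k < length ns \<longrightarrow> (\<Sum>i<cut ns k. y i) \<ge> 0}"

definition aM :: "nat list \<Rightarrow> (nat \<Rightarrow> real) set" where
  "aM ns = {x \<in> afrak (sum_list ns). \<forall>s<length ns. (\<Sum>i\<in>blk ns s. x i) = 0}"

definition aplusM :: "nat list \<Rightarrow> (nat \<Rightarrow> real) set" where
  "aplusM ns = {x \<in> aM ns. \<forall>i j. i < j \<and> same_blk ns i j \<longrightarrow> x i \<ge> x j}"

text \<open>Lebesgue measure on afrak induced by the trace-form inner product: push forward of
  Lebesgue measure on R^(N-1) along the parametrisation w |-> (w_1,..,w_(N-1), -sum w),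
  whose volume distortion factor is sqrt N.\<close>
definition embedA :: "nat \<Rightarrow> (nat \<Rightarrow> real) \<Rightarrow> (nat \<Rightarrow> real)" where
  "embedA N w = (\<lambda>i. if i < N - 1 then w i else if i = N - 1 then - (\<Sum>j<N - 1. w j) else 0)"

definition lebA :: "nat \<Rightarrow> (nat \<Rightarrow> real) measure" where
  "lebA N = density (distr (PiM {..<N - 1} (\<lambda>_. lborel)) (PiM UNIV (\<lambda>_. borel)) (embedA N))
              (\<lambda>_. ennreal (sqrt (real N)))"

text \<open>Orthogonal decomposition afrak = afrak_M (+) afrak_I0, z |-> (z - blockavg z, blockavg z);
  this is an isometry, so it carries Lebesgue measure of afrak to the Lebesgue measure
  of the product afrak_M x afrak_I0.\<close>
definition blockavg :: "nat list \<Rightarrow> (nat \<Rightarrow> real) \<Rightarrow> (nat \<Rightarrow> real)" where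
  "blockavg ns z = (\<lambda>i. \<Sum>s<length ns. if i \<in> blk ns s
        then (\<Sum>j\<in>blk ns s. z j) / real (card (blk ns s)) else 0)"

definition decompA :: "nat list \<Rightarrow> (nat \<Rightarrow> real) \<Rightarrow> (nat \<Rightarrow> real) \<times> (nat \<Rightarrow> real)" where
  "decompA ns z = (\<lambda>i. z i - blockavg ns z i, blockavg ns z)"

definition lebAMI :: "nat list \<Rightarrow> ((nat \<Rightarrow> real) \<times> (nat \<Rightarrow> real)) measure" where
  "lebAMI ns = distr (lebA (sum_list ns))
      (PiM UNIV (\<lambda>_. borel) \<Otimes>\<^sub>M PiM UNIV (\<lambda>_. borel)) (decompA ns)"

definition densA :: "nat list \<Rightarrow> (nat \<Rightarrow> real) \<Rightarrow> (nat \<Rightarrow> real) \<Rightarrow> real" where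
  "densA ns x y = (\<Prod>i<sum_list ns. \<Prod>j\<in>{i<..<sum_list ns}.
      if same_blk ns i j then (exp (x i - x j) - exp (x j - x i)) / 2 else exp (y i - y j))"

definition muA :: "nat list \<Rightarrow> ((nat \<Rightarrow> real) \<times> (nat \<Rightarrow> real)) measure" where
  "muA ns = density (lebAMI ns)
      (\<lambda>p. indicator (aplusM ns \<times> aI ns) p * ennreal (densA ns (fst p) (snd p)))"

definition Ba :: "nat list \<Rightarrow> real \<Rightarrow> ((nat \<Rightarrow> real) \<times> (nat \<Rightarrow> real)) set" where
  "Ba ns R = {(x, y). x \<in> aplusM ns \<and> y \<in> aI ns \<and> anorm (sum_list ns) (\<lambda>i. x i + y i) \<le> R}"

definition Bplus :: "nat list \<Rightarrow> real \<Rightarrow> ((nat \<Rightarrow> real) \<times> (nat \<Rightarrow> real)) set" where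
  "Bplus ns R = Ba ns R \<inter> (aplusM ns \<times> aplusI ns)"

definition Bplus_delta :: "nat list \<Rightarrow> real \<Rightarrow> real \<Rightarrow> ((nat \<Rightarrow> real) \<times> (nat \<Rightarrow> real)) set" where
  "Bplus_delta ns R \<delta> = Bplus ns R - Bplus ns (\<delta> * R)"

definition coneC :: "nat list \<Rightarrow> real \<Rightarrow> (nat \<Rightarrow> real) set" where
  "coneC ns C = {z \<in> afrak (sum_list ns).
      (\<forall>i j. i < j \<and> same_blk ns i j \<longrightarrow> z i - z j \<ge> max 0 C) \<and>
      (\<forall>k. 1 \<le> k \<and> k < length ns \<longrightarrow> (\<Sum>i<cut ns k. z i) \<ge> C)}"

definition BCplus :: "nat list \<Rightarrow> real \<Rightarrow> real \<Rightarrow> ((nat \<Rightarrow> real) \<times> (nat \<Rightarrow> real)) set" where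
  "BCplus ns C R = {(x, y) \<in> Ba ns R. (\<lambda>i. x i + y i) \<in> coneC ns C}"

end

theory Submission
  imports Defs
begin

abbreviation "PB \<equiv> PiM UNIV (\<lambda>_::nat. borel::real measure)"
abbreviation predm :: "'a measure \<Rightarrow> ('a \<Rightarrow> bool) \<Rightarrow> bool" where "predm M P \<equiv> P \<in> measurable M (count_space (UNIV::bool set))"

lemma pred_True: "predm M (\<lambda>z. True)"
  by (rule measurable_const) simp

lemma pred_all1_imp:
  fixes M :: "'a measure" and Q :: "nat \<Rightarrow> 'a \<Rightarrow> bool"
  assumes "\<And>i. P i \<Longrightarrow> predm M (Q i)"
  shows "predm M (\<lambda>z. \<forall>i::nat. P i \<longrightarrow> Q i z)"
proof -
  have "predm M (\<lambda>z. P i \<longrightarrow> Q i z)" for i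
    by (cases "P i") (simp_all add: assms pred_True)
  then show ?thesis by (rule pred_intros_countable(1))
qed
lemma pred_all2_imp:
  fixes M :: "'a measure" and Q :: "nat \<Rightarrow> nat \<Rightarrow> 'a \<Rightarrow> bool"
  assumes "\<And>i j. P i j \<Longrightarrow> predm M (Q i j)"
  shows "predm M (\<lambda>z. \<forall>i::nat. \<forall>j::nat. P i j \<longrightarrow> Q i j z)"
proof -
  have "predm M (\<lambda>z. \<forall>j::nat. P i j \<longrightarrow> Q i j z)" for i
    by (rule pred_all1_imp) (use assms in auto)
  then show ?thesis by (rule pred_intros_countable(1))
qed

lemma meas_sumz[measurable]: "(\<lambda>z. sum z A) \<in> borel_measurable PB"
proof -
  have "(\<lambda>z. \<Sum>i\<in>A. z i) \<in> borel_measurable PB" 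
    by (rule borel_measurable_sum) (rule measurable_component_singleton, simp)
  then show ?thesis by simp
qed
lemma a1: "predm PB (\<lambda>z. z \<in> afrak N)"
  unfolding afrak_def mem_Collect_eq
  by (intro pred_intros_logic pred_all1_imp) measurable
lemma comp_meas[measurable]: "(\<lambda>z. z i) \<in> borel_measurable PB"
  by (rule measurable_component_singleton) simp
lemma pz_le: "predm PB (\<lambda>z. z j \<le> z i)" 
  unfolding pred_def by (rule borel_measurable_le) (rule comp_meas)+
lemma pz_eq: "predm PB (\<lambda>z. z i = z j)"
  unfolding pred_def by (rule borel_measurable_eq) (rule comp_meas)+
lemma a3: "predm PB (\<lambda>z. z \<in> aM ns)"
  unfolding aM_def mem_Collect_eq
  by (intro pred_intros_logic pred_all1_imp a1) measurable
lemma a4: "predm PB (\<lambda>z. z \<in> aplusM ns)"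
  unfolding aplusM_def mem_Collect_eq
  by (intro pred_intros_logic pred_all2_imp a3 pz_le)
lemma a5: "predm PB (\<lambda>z. z \<in> aI ns)"
  unfolding aI_def mem_Collect_eq
  by (intro pred_intros_logic pred_all2_imp a1 pz_eq)
lemma a6: "predm PB (\<lambda>z. z \<in> aplusI ns)"
  unfolding aplusI_def mem_Collect_eq
  by (intro pred_intros_logic pred_all1_imp a5) measurable
lemma a7: "predm PB (\<lambda>z. z \<in> coneC ns C)"
  unfolding coneC_def mem_Collect_eq
  by (intro pred_intros_logic pred_all1_imp pred_all2_imp a1) measurable
lemma a8: "anorm N \<in> borel_measurable PB"
  unfolding anorm_def by measurable

lemma space_PB[simp]: "space PB = UNIV"
  by (auto simp: space_PiM)
lemma space_PB2[simp]: "space (PB \<Otimes>\<^sub>M PB) = UNIV"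
  by (simp add: space_pair_measure)

lemma predm_fst: "predm PB P \<Longrightarrow> predm (PB \<Otimes>\<^sub>M PB) (\<lambda>p. P (fst p))"
  by (rule measurable_compose[OF measurable_fst]) 
lemma predm_snd: "predm PB P \<Longrightarrow> predm (PB \<Otimes>\<^sub>M PB) (\<lambda>p. P (snd p))"
  by (rule measurable_compose[OF measurable_snd]) 
lemma sum_meas2: "(\<lambda>p. (\<lambda>i. fst p i + snd p i)) \<in> measurable (PB \<Otimes>\<^sub>M PB) PB"
  by (rule measurable_PiM_single') (auto intro!: borel_measurable_add measurable_compose[OF measurable_fst comp_meas] measurable_compose[OF measurable_snd comp_meas])

lemma sets_Ba: "Ba ns R \<in> sets (PB \<Otimes>\<^sub>M PB)"
proof -
  have "predm (PB \<Otimes>\<^sub>M PB) (\<lambda>p. fst p \<in> aplusM ns \<and> snd p \<in> aI ns \<and> anorm (sum_list ns) (\<lambda>i. fst p i + snd p i) \<le> R)"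
    apply (intro pred_intros_logic predm_fst predm_snd a4 a5)
    unfolding pred_def 
    apply (rule borel_measurable_le)
    apply (rule measurable_compose[OF sum_meas2 a8])
    by simp
  moreover have "Ba ns R = {p. fst p \<in> aplusM ns \<and> snd p \<in> aI ns \<and> anorm (sum_list ns) (\<lambda>i. fst p i + snd p i) \<le> R}"
    unfolding Ba_def by auto
  ultimately show ?thesis unfolding pred_def by simp
qed
lemma sets_Bplus: "Bplus ns R \<in> sets (PB \<Otimes>\<^sub>M PB)"
proof -
  have "aplusM ns \<times> aplusI ns \<in> sets (PB \<Otimes>\<^sub>M PB)"
    using a4[of ns] a6[of ns] unfolding pred_def by (intro pair_measureI) auto
  then show ?thesis unfolding Bplus_def using sets_Ba by blast
qed
lemma sets_AM: "aplusM ns \<times> aI ns \<in> sets (PB \<Otimes>\<^sub>M PB)"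
    using a4[of ns] a5[of ns] unfolding pred_def by (intro pair_measureI) auto
lemma sets_BCplus: "BCplus ns C R \<in> sets (PB \<Otimes>\<^sub>M PB)"
proof -
  have "predm (PB \<Otimes>\<^sub>M PB) (\<lambda>p. (\<lambda>i. fst p i + snd p i) \<in> coneC ns C)"
    by (rule measurable_compose[OF sum_meas2 a7])
  then have "{p. (\<lambda>i. fst p i + snd p i) \<in> coneC ns C} \<in> sets (PB \<Otimes>\<^sub>M PB)"
    unfolding pred_def by simp
  moreover have "BCplus ns C R = Ba ns R \<inter> {p. (\<lambda>i. fst p i + snd p i) \<in> coneC ns C}"
    unfolding BCplus_def by auto
  ultimately show ?thesis using sets_Ba by auto
qed

lemma bavg_meas: "(\<lambda>z. blockavg ns z i) \<in> borel_measurable PB"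
  unfolding blockavg_def
proof (rule borel_measurable_sum)
  fix s
  show "(\<lambda>z. if i \<in> blk ns s then sum z (blk ns s) / real (card (blk ns s)) else 0) \<in> borel_measurable PB"
    by (cases "i \<in> blk ns s") (simp_all add: borel_measurable_divide meas_sumz)
qed
lemma bavg_meas2: "blockavg ns \<in> measurable PB PB"
  by (rule measurable_PiM_single') (simp_all add: bavg_meas)
lemma decomp_meas: "decompA ns \<in> measurable PB (PB \<Otimes>\<^sub>M PB)"
  unfolding decompA_def
  apply (rule measurable_Pair[OF _ bavg_meas2])
  apply (rule measurable_PiM_single')
  by (simp_all add: borel_measurable_diff bavg_meas comp_meas)

lemma embed_meas: "embedA N \<in> measurable (PiM {..<N-1} (\<lambda>_. lborel)) PB"
  unfolding embedA_def 
proof (rule measurable_PiM_single')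
  fix i :: nat
  show "(\<lambda>\<omega>. if i < N - 1 then \<omega> i else if i = N - 1 then - (\<Sum>j<N - 1. \<omega> j) else 0) \<in> borel_measurable (PiM {..<N-1} (\<lambda>_. lborel))"
  proof (cases "i < N - 1")
    case True
    then show ?thesis by (simp add: measurable_component_singleton)
  next
    case False
    have "(\<lambda>\<omega>. (\<Sum>j<N - 1. \<omega> j)) \<in> borel_measurable (PiM {..<N-1} (\<lambda>_. lborel))"
      by (rule borel_measurable_sum) (simp add: measurable_component_singleton)
    then show ?thesis using False by (cases "i = N - 1") (simp_all add: borel_measurable_uminus)
  qed
qed (simp add: space_PiM)

lemma dens_meas: "(\<lambda>p. densA ns (fst p) (snd p)) \<in> borel_measurable (PB \<Otimes>\<^sub>M PB)"
  unfolding densA_def 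
proof (intro borel_measurable_prod)
  fix i j
  have f: "(\<lambda>p. fst p k) \<in> borel_measurable (PB \<Otimes>\<^sub>M PB)" "(\<lambda>p. snd p k) \<in> borel_measurable (PB \<Otimes>\<^sub>M PB)" for k
    by (rule measurable_compose[OF measurable_fst comp_meas], rule measurable_compose[OF measurable_snd comp_meas])
  show "(\<lambda>p. if same_blk ns i j then (exp (fst p i - fst p j) - exp (fst p j - fst p i)) / 2 else exp (snd p i - snd p j)) \<in> borel_measurable (PB \<Otimes>\<^sub>M PB)"
    by (cases "same_blk ns i j") (simp_all add: f borel_measurable_diff borel_measurable_divide borel_measurable_exp[THEN measurable_compose])
qed


lemma cut_0[simp]: "cut ns 0 = 0" by (simp add: cut_def)

lemma cut_add: "cut ns (s + d) = cut ns s + sum_list (take d (drop s ns))"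
  by (simp add: cut_def take_add)

lemma cut_mono: "s \<le> t \<Longrightarrow> cut ns s \<le> cut ns t"
  using cut_add[of ns s "t - s"] by simp

lemma cut_Suc: "s < length ns \<Longrightarrow> cut ns (Suc s) = cut ns s + ns ! s"
  by (simp add: cut_def take_Suc_conv_app_nth)

lemma cut_ge: "length ns \<le> k \<Longrightarrow> cut ns k = sum_list ns"
  by (simp add: cut_def)

lemma blk_lt: "i \<in> blk ns s \<Longrightarrow> j \<in> blk ns t \<Longrightarrow> s < t \<Longrightarrow> i < j"
  using cut_mono[of "Suc s" t ns] by (auto simp: blk_def)

lemma blk_unique: "i \<in> blk ns s \<Longrightarrow> i \<in> blk ns t \<Longrightarrow> s = t"
  using blk_lt[of i ns s i t] blk_lt[of i ns t i s] by (metis less_irrefl nat_neq_iff)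

lemma blk_Union: "(\<Union>s<k. blk ns s) = {..<cut ns k}"
proof (induction k)
  case 0 then show ?case by simp
next
  case (Suc k)
  have "cut ns k \<le> cut ns (Suc k)" by (rule cut_mono) simp
  then have "{..<cut ns k} \<union> blk ns k = {..<cut ns (Suc k)}" by (auto simp: blk_def)
  then show ?case using Suc by (simp add: lessThan_Suc Un_commute)
qed

lemma blk_sub: "blk ns s \<subseteq> {..<sum_list ns}"
  using cut_mono[of "Suc s" "length ns" ns] cut_ge[of ns "length ns"] cut_ge[of ns "Suc s"]
  by (cases "Suc s \<le> length ns") (auto simp: blk_def)

lemma blk_empty: "length ns \<le> s \<Longrightarrow> blk ns s = {}"
  by (simp add: blk_def cut_ge)

lemma card_blk: "s < length ns \<Longrightarrow> card (blk ns s) = ns ! s"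
  by (simp add: blk_def cut_Suc)

lemma exists_blk: "i < sum_list ns \<Longrightarrow> \<exists>s<length ns. i \<in> blk ns s"
  using blk_Union[of ns "length ns"] cut_ge[of ns "length ns"] by auto

lemma same_blk_iff: "i \<in> blk ns s \<Longrightarrow> j \<in> blk ns t \<Longrightarrow> same_blk ns i j \<longleftrightarrow> s = t"
  unfolding same_blk_def using blk_unique blk_empty
  by (metis empty_iff not_le)

lemma same_blk_lt: "same_blk ns i j \<Longrightarrow> i < sum_list ns \<and> j < sum_list ns"
  unfolding same_blk_def using blk_sub by blast

lemma bavg_eq: "i \<in> blk ns s \<Longrightarrow> blockavg ns z i = sum z (blk ns s) / real (card (blk ns s))"
proof -
  assume i: "i \<in> blk ns s"
  then have s: "s < length ns" using blk_empty by (metis empty_iff not_le)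
  have "blockavg ns z i = (\<Sum>t<length ns. if t = s then sum z (blk ns s) / real (card (blk ns s)) else 0)"
    unfolding blockavg_def using i blk_unique by (intro sum.cong) auto
  also have "\<dots> = sum z (blk ns s) / real (card (blk ns s))" using s by simp
  finally show ?thesis .
qed

lemma bavg_out: "sum_list ns \<le> i \<Longrightarrow> blockavg ns z i = 0"
  unfolding blockavg_def using blk_sub by (intro sum.neutral) fastforce

lemma regroup_cut: "sum f {..<cut ns k} = (\<Sum>s<k. sum f (blk ns s))"
proof -
  have "sum f {..<cut ns k} = sum f (\<Union>s<k. blk ns s)" by (simp add: blk_Union)
  also have "\<dots> = (\<Sum>s<k. sum f (blk ns s))"
    proof (rule sum.UNION_disjoint)
    show "\<forall>i\<in>{..<k}. \<forall>j\<in>{..<k}. i \<noteq> j \<longrightarrow> blk ns i \<inter> blk ns j = {}"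
      using blk_unique by blast
  qed (auto simp: blk_def)
  finally show ?thesis .
qed

lemma regroup: "sum f {..<sum_list ns} = (\<Sum>s<length ns. sum f (blk ns s))"
  using regroup_cut[of f ns "length ns"] by (simp add: cut_ge)


definition inD :: "nat list \<Rightarrow> (nat \<Rightarrow> real) \<Rightarrow> bool" where
  "inD ns z \<longleftrightarrow> (\<forall>i j. i < j \<and> same_blk ns i j \<longrightarrow> z j \<le> z i)"

definition FF :: "nat list \<Rightarrow> (nat \<Rightarrow> real) \<Rightarrow> real" where
  "FF ns z = (\<Prod>i<sum_list ns. \<Prod>j\<in>{i<..<sum_list ns}.
      if same_blk ns i j then (exp (z i - z j) - exp (z j - z i)) / 2
      else exp (blockavg ns z i - blockavg ns z j))"

lemma bsum_blk: "(\<Sum>i\<in>blk ns s. blockavg ns z i) = sum z (blk ns s)"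
proof -
  have "(\<Sum>i\<in>blk ns s. blockavg ns z i) = (\<Sum>i\<in>blk ns s. sum z (blk ns s) / real (card (blk ns s)))"
    by (intro sum.cong) (auto simp: bavg_eq)
  also have "\<dots> = sum z (blk ns s)"
    by (cases "card (blk ns s) = 0") (auto simp: blk_def)
  finally show ?thesis .
qed

lemma bsum_cut: "(\<Sum>i<cut ns k. blockavg ns z i) = (\<Sum>i<cut ns k. z i)"
  by (simp add: regroup_cut bsum_blk)

lemma bsum_all: "(\<Sum>i<sum_list ns. blockavg ns z i) = (\<Sum>i<sum_list ns. z i)"
  by (simp add: regroup bsum_blk)

lemma b_same: "same_blk ns i j \<Longrightarrow> blockavg ns z i = blockavg ns z j"
  unfolding same_blk_def by (auto simp: bavg_eq)

lemma decomp_fst_aM: "z \<in> afrak (sum_list ns) \<Longrightarrow> fst (decompA ns z) \<in> aM ns"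
proof -
  assume z: "z \<in> afrak (sum_list ns)"
  have "(\<Sum>i<sum_list ns. z i - blockavg ns z i) = 0"
    by (simp add: sum_subtractf bsum_all)
  moreover have "(\<Sum>i\<in>blk ns s. z i - blockavg ns z i) = 0" for s
    by (simp add: sum_subtractf bsum_blk)
  ultimately show ?thesis using z by (auto simp: decompA_def aM_def afrak_def bavg_out)
qed

lemma decomp_snd_aI: "z \<in> afrak (sum_list ns) \<Longrightarrow> snd (decompA ns z) \<in> aI ns"
  using bsum_all[of ns z] by (auto simp: decompA_def aI_def afrak_def bavg_out b_same)

lemma decomp_sum: "(\<lambda>i. fst (decompA ns z) i + snd (decompA ns z) i) = z"
  by (simp add: decompA_def)

lemma same_le_iff: "same_blk ns i j \<Longrightarrow> (z j - blockavg ns z j \<le> z i - blockavg ns z i) \<longleftrightarrow> z j \<le> z i"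
  using b_same[of ns i j z] by simp

lemma decomp_AM: "z \<in> afrak (sum_list ns) \<Longrightarrow> decompA ns z \<in> aplusM ns \<times> aI ns \<longleftrightarrow> inD ns z"
  using decomp_fst_aM[of z ns] decomp_snd_aI[of z ns]
  by (auto simp: aplusM_def inD_def decompA_def same_le_iff)

lemma decomp_Ba: "z \<in> afrak (sum_list ns) \<Longrightarrow> decompA ns z \<in> Ba ns R \<longleftrightarrow> inD ns z \<and> anorm (sum_list ns) z \<le> R"
  using decomp_AM[of z ns] decomp_sum[of ns z]
  by (cases "decompA ns z") (auto simp: Ba_def)

lemma decomp_Bplus: "z \<in> afrak (sum_list ns) \<Longrightarrow> decompA ns z \<in> Bplus ns R \<longleftrightarrow>
    inD ns z \<and> anorm (sum_list ns) z \<le> R \<and> (\<forall>k. 1 \<le> k \<and> k < length ns \<longrightarrow> 0 \<le> (\<Sum>i<cut ns k. z i))"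
  using decomp_Ba[of z ns R] decomp_AM[of z ns] decomp_snd_aI[of z ns] bsum_cut[of ns z]
  by (auto simp: Bplus_def aplusI_def decompA_def)

lemma decomp_BC: "z \<in> afrak (sum_list ns) \<Longrightarrow> C \<le> 0 \<Longrightarrow> decompA ns z \<in> BCplus ns C R \<longleftrightarrow>
    inD ns z \<and> anorm (sum_list ns) z \<le> R \<and> (\<forall>k. 1 \<le> k \<and> k < length ns \<longrightarrow> C \<le> (\<Sum>i<cut ns k. z i))"
  using decomp_Ba[of z ns R] decomp_sum[of ns z]
  by (cases "decompA ns z") (auto simp: BCplus_def coneC_def inD_def max_def)

lemma decomp_dens: "densA ns (fst (decompA ns z)) (snd (decompA ns z)) = FF ns z"
  unfolding densA_def FF_def decompA_def fst_conv snd_conv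
  by (intro prod.cong refl) (auto simp: b_same)


definition ell :: "nat list \<Rightarrow> (nat \<Rightarrow> real) \<Rightarrow> nat \<Rightarrow> nat \<Rightarrow> real" where
  "ell ns z i j = (if same_blk ns i j then z i - z j else blockavg ns z i - blockavg ns z j)"

definition LL :: "nat list \<Rightarrow> (nat \<Rightarrow> real) \<Rightarrow> real" where
  "LL ns z = (\<Sum>i<sum_list ns. \<Sum>j\<in>{i<..<sum_list ns}. ell ns z i j)"

definition v0 :: "nat \<Rightarrow> nat \<Rightarrow> real" where
  "v0 N i = (if i < N then real N - 1 - 2 * real i else 0)"

lemma pair_sum_formula:
  "(\<Sum>i<M. \<Sum>j\<in>{i<..<M}. (z i - z j::real)) = (\<Sum>i<M. (real M - 1 - 2 * real i) * z i)"
proof (induction M)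
  case 0 then show ?case by simp
next
  case (Suc M)
  have "(\<Sum>i<Suc M. \<Sum>j\<in>{i<..<Suc M}. (z i - z j)) = (\<Sum>i<M. \<Sum>j\<in>{i<..<Suc M}. (z i - z j))"
  proof -
    have "{M<..<Suc M} = {}" by auto
    then show ?thesis by simp
  qed
  also have "\<dots> = (\<Sum>i<M. (\<Sum>j\<in>{i<..<M}. (z i - z j)) + (z i - z M))"
  proof (intro sum.cong refl)
    fix i assume "i \<in> {..<M}"
    then have "{i<..<Suc M} = insert M {i<..<M}" by auto
    then show "(\<Sum>j\<in>{i<..<Suc M}. (z i - z j)) = (\<Sum>j\<in>{i<..<M}. (z i - z j)) + (z i - z M)"
      by simp
  qed
  also have "\<dots> = (\<Sum>i<M. \<Sum>j\<in>{i<..<M}. (z i - z j)) + (\<Sum>i<M. z i) - real M * z M"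
    by (simp add: sum.distrib sum_subtractf)
  also have "\<dots> = (\<Sum>i<M. (real M - 1 - 2 * real i) * z i) + (\<Sum>i<M. z i) - real M * z M"
    by (simp only: Suc.IH)
  also have "\<dots> = (\<Sum>i<Suc M. (real (Suc M) - 1 - 2 * real i) * z i)"
    by (simp add: sum.distrib[symmetric] algebra_simps)
  finally show ?case .
qed

lemma cross_zero:
  assumes x: "\<And>s. sum x (blk ns s) = 0"
  shows "(\<Sum>i<sum_list ns. \<Sum>j\<in>{i<..<sum_list ns}. if same_blk ns i j then 0 else x i - x j) = (0::real)"
proof -
  let ?N = "sum_list ns"
  let ?h = "\<lambda>i j. if i < j \<and> \<not> same_blk ns i j then x i - x j else 0"
  have "(\<Sum>i<?N. \<Sum>j\<in>{i<..<?N}. if same_blk ns i j then 0 else x i - x j) = (\<Sum>i<?N. \<Sum>j<?N. ?h i j)"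
  proof (rule sum.cong[OF refl])
    fix i
    have e: "{i<..<?N} = {j \<in> {..<?N}. i < j}" by auto
    have "(\<Sum>j\<in>{j \<in> {..<?N}. i < j}. if same_blk ns i j then 0 else x i - x j) = 
          (\<Sum>j<?N. if i < j then (if same_blk ns i j then 0 else x i - x j) else 0)"
      by (rule sum.inter_filter) simp
    also have "\<dots> = (\<Sum>j<?N. ?h i j)"
      by (rule sum.cong[OF refl]) auto
    finally show "(\<Sum>j\<in>{i<..<?N}. if same_blk ns i j then 0 else x i - x j) = (\<Sum>j<?N. ?h i j)"
      unfolding e .
  qed
  also have "\<dots> = (\<Sum>s<length ns. \<Sum>i\<in>blk ns s. \<Sum>t<length ns. \<Sum>j\<in>blk ns t. ?h i j)"
    by (simp add: regroup[symmetric])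
  also have "\<dots> = (\<Sum>s<length ns. \<Sum>i\<in>blk ns s. \<Sum>t<length ns. \<Sum>j\<in>blk ns t. if s < t then x i - x j else 0)"
  proof (intro sum.cong refl)
    fix s i t j assume "i \<in> blk ns s" "j \<in> blk ns t"
    then have "(i < j \<and> \<not> same_blk ns i j) \<longleftrightarrow> s < t"
      using blk_lt[of i ns s j t] blk_lt[of j ns t i s] same_blk_iff[of i ns s j t]
      by (metis less_irrefl nat_neq_iff order.strict_trans)
    then show "?h i j = (if s < t then x i - x j else 0)" by simp
  qed
  also have "\<dots> = (\<Sum>s<length ns. \<Sum>t<length ns. if s < t then (\<Sum>i\<in>blk ns s. \<Sum>j\<in>blk ns t. x i - x j) else 0)"
  proof (rule sum.cong[OF refl])
    fix s
    have "(\<Sum>i\<in>blk ns s. \<Sum>t<length ns. \<Sum>j\<in>blk ns t. if s < t then x i - x j else 0)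
        = (\<Sum>t<length ns. \<Sum>i\<in>blk ns s. \<Sum>j\<in>blk ns t. if s < t then x i - x j else 0)"
      by (rule sum.swap)
    also have "\<dots> = (\<Sum>t<length ns. if s < t then (\<Sum>i\<in>blk ns s. \<Sum>j\<in>blk ns t. x i - x j) else 0)"
      by (rule sum.cong[OF refl]) simp
    finally show "(\<Sum>i\<in>blk ns s. \<Sum>t<length ns. \<Sum>j\<in>blk ns t. if s < t then x i - x j else 0)
        = (\<Sum>t<length ns. if s < t then (\<Sum>i\<in>blk ns s. \<Sum>j\<in>blk ns t. x i - x j) else 0)" .
  qed
  also have "\<dots> = 0"
  proof (rule sum.neutral, rule ballI)
    fix s
    have "(\<Sum>i\<in>blk ns s. \<Sum>j\<in>blk ns t. x i - x j) = 0" for t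
    proof -
      have "(\<Sum>i\<in>blk ns s. \<Sum>j\<in>blk ns t. x i - x j) = (\<Sum>i\<in>blk ns s. real (card (blk ns t)) * x i - sum x (blk ns t))"
        by (rule sum.cong[OF refl]) (simp add: sum_subtractf)
      also have "\<dots> = real (card (blk ns t)) * sum x (blk ns s) - real (card (blk ns s)) * sum x (blk ns t)"
        by (simp add: sum_subtractf sum_distrib_left)
      finally show ?thesis by (simp add: x)
    qed
    then show "(\<Sum>t<length ns. if s < t then (\<Sum>i\<in>blk ns s. \<Sum>j\<in>blk ns t. x i - x j) else 0) = 0"
      by (simp only: if_cancel sum.neutral_const)
  qed
  finally show ?thesis .
qed

lemma LL_formula: "LL ns z = (\<Sum>i<sum_list ns. v0 (sum_list ns) i * z i)"
proof -
  let ?N = "sum_list ns"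
  let ?x = "\<lambda>i. z i - blockavg ns z i"
  have x: "sum ?x (blk ns s) = 0" for s by (simp add: sum_subtractf bsum_blk)
  have "LL ns z = (\<Sum>i<?N. \<Sum>j\<in>{i<..<?N}. (z i - z j) - (if same_blk ns i j then 0 else ?x i - ?x j))"
    unfolding LL_def ell_def by (intro sum.cong refl) auto
  also have "\<dots> = (\<Sum>i<?N. \<Sum>j\<in>{i<..<?N}. (z i - z j)) - (\<Sum>i<?N. \<Sum>j\<in>{i<..<?N}. (if same_blk ns i j then 0 else ?x i - ?x j))"
    by (simp add: sum_subtractf)
  also have "\<dots> = (\<Sum>i<?N. \<Sum>j\<in>{i<..<?N}. (z i - z j))"
    using cross_zero[of ?x ns, OF x] by simp
  also have "\<dots> = (\<Sum>i<?N. v0 ?N i * z i)"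
    by (simp add: pair_sum_formula v0_def)
  finally show ?thesis .
qed


lemma bavg_lin: "blockavg ns (\<lambda>i. z i + t * v i) k = blockavg ns z k + t * blockavg ns v k"
proof -
  have "blockavg ns (\<lambda>i. z i + t * v i) k = (\<Sum>s<length ns. (if k \<in> blk ns s then sum z (blk ns s) / real (card (blk ns s)) else 0)
     + t * (if k \<in> blk ns s then sum v (blk ns s) / real (card (blk ns s)) else 0))"
    unfolding blockavg_def by (rule sum.cong[OF refl]) (simp add: sum.distrib sum_distrib_left[symmetric] add_divide_distrib)
  then show ?thesis by (simp add: blockavg_def sum.distrib sum_distrib_left)
qed

lemma sinh_le_exp: "(exp d - exp (- d)) / 2 \<le> exp (d::real)"
proof -
  have "exp d - exp (- d) \<le> 2 * exp d" using exp_gt_zero[of "-d"] exp_gt_zero[of d] by linarith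
  then show ?thesis by simp
qed

lemma sinh_nonneg: "0 \<le> (d::real) \<Longrightarrow> 0 \<le> (exp d - exp (- d)) / 2"
  by simp

lemma sinh_shift: "0 \<le> (e::real) \<Longrightarrow> p - q = d + e \<Longrightarrow> exp e * ((exp d - exp (- d)) / 2) \<le> (exp (p - q) - exp (q - p)) / 2"
proof -
  assume e: "0 \<le> e" and pq: "p - q = d + e"
  have qp: "q - p = - (d + e)" using pq by simp
  have "exp (- (d + e)) \<le> exp (e + - d)" using e by simp
  then have "exp (- (d + e)) \<le> exp e * exp (- d)" by (simp only: exp_add)
  moreover have "exp e * ((exp d - exp (- d)) / 2) = (exp (d + e) - exp e * exp (- d)) / 2"
    by (simp add: exp_add algebra_simps)
  moreover have "(exp (d + e) - exp e * exp (- d)) / 2 \<le> (exp (d + e) - exp (- (d + e))) / 2"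
    by (rule divide_right_mono) (use calculation in auto)
  ultimately show ?thesis unfolding pq qp by simp
qed

lemma FF_upper:
  assumes "inD ns z"
  shows "FF ns z \<le> exp (LL ns z)"
proof -
  let ?N = "sum_list ns"
  have "FF ns z \<le> (\<Prod>i<?N. \<Prod>j\<in>{i<..<?N}. exp (ell ns z i j))"
    unfolding FF_def
  proof (rule prod_mono, rule conjI)
    fix i assume i: "i \<in> {..<?N}"
    have fac: "0 \<le> (if same_blk ns i j then (exp (z i - z j) - exp (z j - z i)) / 2 else exp (blockavg ns z i - blockavg ns z j))
       \<and> (if same_blk ns i j then (exp (z i - z j) - exp (z j - z i)) / 2 else exp (blockavg ns z i - blockavg ns z j)) \<le> exp (ell ns z i j)"
      if j: "j \<in> {i<..<?N}" for j
    proof (cases "same_blk ns i j")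
      case True
      then have "z j \<le> z i" using assms j unfolding inD_def by auto
      then show ?thesis using True sinh_le_exp[of "z i - z j"] by (simp add: ell_def)
    qed (simp add: ell_def)
    show "0 \<le> (\<Prod>j\<in>{i<..<?N}. if same_blk ns i j then (exp (z i - z j) - exp (z j - z i)) / 2 else exp (blockavg ns z i - blockavg ns z j))"
      using fac by (intro prod_nonneg) blast
    show "(\<Prod>j\<in>{i<..<?N}. if same_blk ns i j then (exp (z i - z j) - exp (z j - z i)) / 2 else exp (blockavg ns z i - blockavg ns z j)) \<le> (\<Prod>j\<in>{i<..<?N}. exp (ell ns z i j))"
      using fac by (intro prod_mono) blast
  qed
  also have "\<dots> = exp (LL ns z)"
    by (simp add: LL_def exp_sum)
  finally show ?thesis .
qed

lemma FF_nonneg: "inD ns z \<Longrightarrow> 0 \<le> FF ns z"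
  unfolding FF_def inD_def by (intro prod_nonneg) auto

lemma FF_pos: "(\<And>i j. i < j \<Longrightarrow> same_blk ns i j \<Longrightarrow> z j < z i) \<Longrightarrow> 0 < FF ns z"
  unfolding FF_def by (intro prod_pos) auto

lemma FF_shift:
  assumes z: "inD ns z" and v: "inD ns v" and t: "0 \<le> t"
  shows "exp (t * LL ns v) * FF ns z \<le> FF ns (\<lambda>i. z i + t * v i)"
proof -
  let ?N = "sum_list ns"
  let ?f = "\<lambda>z i j. if same_blk ns i j then (exp (z i - z j) - exp (z j - z i)) / 2 else exp (blockavg ns z i - blockavg ns z j)"
  have "exp (t * LL ns v) * FF ns z = (\<Prod>i<?N. \<Prod>j\<in>{i<..<?N}. exp (t * ell ns v i j) * ?f z i j)"
    by (simp add: LL_def FF_def exp_sum sum_distrib_left prod.distrib)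
  also have "\<dots> \<le> (\<Prod>i<?N. \<Prod>j\<in>{i<..<?N}. ?f (\<lambda>i. z i + t * v i) i j)"
  proof (rule prod_mono, rule conjI)
    fix i assume i: "i \<in> {..<?N}"
    have fac: "0 \<le> exp (t * ell ns v i j) * ?f z i j \<and> exp (t * ell ns v i j) * ?f z i j \<le> ?f (\<lambda>i. z i + t * v i) i j"
      if j: "j \<in> {i<..<?N}" for j
    proof (cases "same_blk ns i j")
      case True
      then have "z j \<le> z i" "v j \<le> v i" using z v j unfolding inD_def by auto
      have "exp (t * (v i - v j)) * ((exp (z i - z j) - exp (- (z i - z j))) / 2)
          \<le> (exp ((z i + t * v i) - (z j + t * v j)) - exp ((z j + t * v j) - (z i + t * v i))) / 2"
        by (rule sinh_shift) (use t \<open>v j \<le> v i\<close> in \<open>auto simp: algebra_simps intro: mult_left_mono\<close>)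
      then have "exp (t * ell ns v i j) * ?f z i j \<le> ?f (\<lambda>i. z i + t * v i) i j"
        unfolding ell_def if_P[OF True] minus_diff_eq .
      moreover have "0 \<le> exp (t * ell ns v i j) * ?f z i j"
        using True \<open>z j \<le> z i\<close> by simp
      ultimately show ?thesis by blast
    next
      case False
      then show ?thesis by (simp add: ell_def bavg_lin exp_add[symmetric] algebra_simps)
    qed
    show "0 \<le> (\<Prod>j\<in>{i<..<?N}. exp (t * ell ns v i j) * ?f z i j)"
      using fac by (intro prod_nonneg) blast
    show "(\<Prod>j\<in>{i<..<?N}. exp (t * ell ns v i j) * ?f z i j) \<le> (\<Prod>j\<in>{i<..<?N}. ?f (\<lambda>i. z i + t * v i) i j)"
      using fac by (intro prod_mono) blast
  qed
  also have "\<dots> = FF ns (\<lambda>i. z i + t * v i)" by (simp add: FF_def)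
  finally show ?thesis .
qed



abbreviation PL :: "nat \<Rightarrow> (nat \<Rightarrow> real) measure" where
  "PL N \<equiv> PiM {..<N-1} (\<lambda>_. lborel)"

definition GG :: "nat list \<Rightarrow> ((nat \<Rightarrow> real) \<times> (nat \<Rightarrow> real)) set \<Rightarrow> (nat \<Rightarrow> real) \<Rightarrow> ennreal" where
  "GG ns S w = ennreal (sqrt (real (sum_list ns))) *
     (indicator (aplusM ns \<times> aI ns) (decompA ns (embedA (sum_list ns) w)) *
      ennreal (densA ns (fst (decompA ns (embedA (sum_list ns) w))) (snd (decompA ns (embedA (sum_list ns) w)))))
     * indicator S (decompA ns (embedA (sum_list ns) w))"

lemma sets_lebA[simp]: "sets (lebA N) = sets PB"
  by (simp add: lebA_def)
lemma sets_lebAMI[simp]: "sets (lebAMI ns) = sets (PB \<Otimes>\<^sub>M PB)"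
  by (simp add: lebAMI_def)

lemma muA_GG:
  assumes S: "S \<in> sets (PB \<Otimes>\<^sub>M PB)"
  shows "emeasure (muA ns) S = (\<integral>\<^sup>+ w. GG ns S w \<partial>PL (sum_list ns))"
proof -
  let ?N = "sum_list ns"
  let ?f = "\<lambda>p. indicator (aplusM ns \<times> aI ns) p * ennreal (densA ns (fst p) (snd p))"
  have fm: "?f \<in> borel_measurable (PB \<Otimes>\<^sub>M PB)"
    using sets_AM[of ns] dens_meas[of ns] by measurable
  have gm: "(\<lambda>p. ?f p * indicator S p) \<in> borel_measurable (PB \<Otimes>\<^sub>M PB)"
    using fm S by measurable
  have "emeasure (muA ns) S = (\<integral>\<^sup>+ p. ?f p * indicator S p \<partial>lebAMI ns)"
    unfolding muA_def using S fm
    by (subst emeasure_density) (auto cong: measurable_cong_sets)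
  also have "\<dots> = (\<integral>\<^sup>+ z. ?f (decompA ns z) * indicator S (decompA ns z) \<partial>lebA ?N)"
    unfolding lebAMI_def using gm decomp_meas[of ns]
    by (subst nn_integral_distr) (auto cong: measurable_cong_sets)
  also have "\<dots> = (\<integral>\<^sup>+ z. ennreal (sqrt (real ?N)) * (?f (decompA ns z) * indicator S (decompA ns z)) \<partial>distr (PL ?N) PB (embedA ?N))"
    unfolding lebA_def using gm decomp_meas[of ns]
    by (subst nn_integral_density) (auto cong: measurable_cong_sets)
  also have "\<dots> = (\<integral>\<^sup>+ w. GG ns S w \<partial>PL ?N)"
    unfolding GG_def using gm decomp_meas[of ns] embed_meas[of ?N]
    by (subst nn_integral_distr) (auto simp: mult.assoc)
  finally show ?thesis .
qed

lemma GG_meas: "S \<in> sets (PB \<Otimes>\<^sub>M PB) \<Longrightarrow> GG ns S \<in> borel_measurable (PL (sum_list ns))"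
proof -
  assume S: "S \<in> sets (PB \<Otimes>\<^sub>M PB)"
  let ?f = "\<lambda>p. ennreal (sqrt (real (sum_list ns))) * (indicator (aplusM ns \<times> aI ns) p * ennreal (densA ns (fst p) (snd p))) * indicator S p"
  have fm: "?f \<in> borel_measurable (PB \<Otimes>\<^sub>M PB)"
    using sets_AM[of ns] dens_meas[of ns] S by measurable
  have "(\<lambda>w. ?f (decompA ns (embedA (sum_list ns) w))) \<in> borel_measurable (PL (sum_list ns))"
    using fm decomp_meas[of ns] embed_meas[of "sum_list ns"] by measurable
  then show ?thesis unfolding GG_def .
qed


lemma lborel_translate_emeasure:
  assumes "A \<in> sets (lborel::real measure)"
  shows "emeasure lborel ((\<lambda>x. x + c) -` A) = emeasure lborel A"
proof -
  have "emeasure lborel A = emeasure (distr lborel borel ((+) c)) A"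
    by (simp add: lborel_distr_plus)
  also have "\<dots> = emeasure lborel ((+) c -` A \<inter> space lborel)"
    using assms by (subst emeasure_distr) auto
  also have "(+) c -` A \<inter> space lborel = (\<lambda>x. x + c) -` A"
    by (auto simp: add.commute)
  finally show ?thesis by simp
qed

lemma comp_meas_lb: "i \<in> I \<Longrightarrow> (\<lambda>x. x i) \<in> borel_measurable (PiM I (\<lambda>_. lborel::real measure))"
  using measurable_component_singleton[of i I "\<lambda>_. lborel::real measure"] by simp

lemma PiM_translate:
  assumes I: "finite I"
  shows "distr (PiM I (\<lambda>_. lborel)) (PiM I (\<lambda>_. lborel)) (\<lambda>w. \<lambda>i\<in>I. w i + a i) = PiM I (\<lambda>_. lborel::real measure)"
proof -
  interpret product_sigma_finite "\<lambda>_. lborel::real measure" by standard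
  have Tm: "(\<lambda>w. \<lambda>i\<in>I. w i + a i) \<in> measurable (PiM I (\<lambda>_. lborel)) (PiM I (\<lambda>_. lborel::real measure))"
    by (intro measurable_restrict) (simp add: comp_meas_lb borel_measurable_add)
  show ?thesis
  proof (rule PiM_eqI[OF I])
    show "sets (distr (PiM I (\<lambda>_. lborel)) (PiM I (\<lambda>_. lborel)) (\<lambda>w. \<lambda>i\<in>I. w i + a i)) = sets (PiM I (\<lambda>_. lborel))"
      by simp
  next
    fix A assume A: "\<And>i. i \<in> I \<Longrightarrow> A i \<in> sets (lborel::real measure)"
    have PA: "Pi\<^sub>E I A \<in> sets (PiM I (\<lambda>_. lborel))" using A I by (intro sets_PiM_I_finite) auto
    have eq: "(\<lambda>w. \<lambda>i\<in>I. w i + a i) -` Pi\<^sub>E I A \<inter> space (PiM I (\<lambda>_. lborel)) = Pi\<^sub>E I (\<lambda>i. (\<lambda>x. x + a i) -` A i)"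
      by (auto simp: space_PiM PiE_def Pi_def extensional_def)
    have A': "(\<lambda>x. x + a i) -` A i \<in> sets lborel" if "i \<in> I" for i
    proof -
      have "(\<lambda>x::real. x + a i) \<in> borel_measurable borel" by simp
      then show ?thesis using A[OF that] by (auto simp: measurable_def)
    qed
    have "emeasure (distr (PiM I (\<lambda>_. lborel)) (PiM I (\<lambda>_. lborel)) (\<lambda>w. \<lambda>i\<in>I. w i + a i)) (Pi\<^sub>E I A)
        = emeasure (PiM I (\<lambda>_. lborel)) (Pi\<^sub>E I (\<lambda>i. (\<lambda>x. x + a i) -` A i))"
      using Tm PA by (subst emeasure_distr) (auto simp: eq)
    also have "\<dots> = (\<Prod>i\<in>I. emeasure lborel ((\<lambda>x. x + a i) -` A i))"
      using A' I by (subst emeasure_PiM) auto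
    also have "\<dots> = (\<Prod>i\<in>I. emeasure lborel (A i))"
      using A by (intro prod.cong refl lborel_translate_emeasure) auto
    finally show "emeasure (distr (PiM I (\<lambda>_. lborel)) (PiM I (\<lambda>_. lborel)) (\<lambda>w. \<lambda>i\<in>I. w i + a i)) (Pi\<^sub>E I A)
        = (\<Prod>i\<in>I. emeasure lborel (A i))" .
  qed
qed

lemma nn_integral_translate:
  assumes I: "finite I" and g: "g \<in> borel_measurable (PiM I (\<lambda>_. lborel::real measure))"
  shows "(\<integral>\<^sup>+ w. g w \<partial>PiM I (\<lambda>_. lborel)) = (\<integral>\<^sup>+ w. g (\<lambda>i\<in>I. w i + a i) \<partial>PiM I (\<lambda>_. lborel))"
proof -
  have Tm: "(\<lambda>w. \<lambda>i\<in>I. w i + a i) \<in> measurable (PiM I (\<lambda>_. lborel)) (PiM I (\<lambda>_. lborel::real measure))"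
    by (intro measurable_restrict) (simp add: comp_meas_lb borel_measurable_add)
  have "(\<integral>\<^sup>+ w. g w \<partial>PiM I (\<lambda>_. lborel)) = (\<integral>\<^sup>+ w. g w \<partial>distr (PiM I (\<lambda>_. lborel)) (PiM I (\<lambda>_. lborel)) (\<lambda>w. \<lambda>i\<in>I. w i + a i))"
    by (simp add: PiM_translate[OF I])
  also have "\<dots> = (\<integral>\<^sup>+ w. g (\<lambda>i\<in>I. w i + a i) \<partial>PiM I (\<lambda>_. lborel))"
    using Tm g by (subst nn_integral_distr) auto
  finally show ?thesis .
qed


lemma anorm_L2: "anorm N z = L2_set z {..<N}"
  by (simp add: anorm_def L2_set_def)

lemma v0_psum: "m \<le> N \<Longrightarrow> (\<Sum>i<m. v0 N i) = real m * (real N - real m)"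
proof (induction m)
  case 0 then show ?case by simp
next
  case (Suc m)
  then show ?case by (simp add: v0_def algebra_simps)
qed

lemma v0_psum_nonneg: "m \<le> N \<Longrightarrow> 0 \<le> (\<Sum>i<m. v0 N i)"
  by (simp add: v0_psum)

lemma v0_afrak: "v0 N \<in> afrak N"
  using v0_psum[of N N] by (simp add: afrak_def v0_def)

lemma v0_gap: "i < j \<Longrightarrow> j < N \<Longrightarrow> v0 N j + 2 \<le> v0 N i"
  by (simp add: v0_def)

lemma v0_inD: "inD ns (v0 (sum_list ns))"
  unfolding inD_def using same_blk_lt v0_gap by (smt (verit))

lemma embed_afrak: "1 \<le> N \<Longrightarrow> embedA N w \<in> afrak N"
proof -
  assume N: "1 \<le> N"
  then obtain n where n: "N = Suc n" by (cases N) auto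
  have "(\<Sum>i<N. embedA N w i) = (\<Sum>i<n. embedA N w i) + embedA N w n"
    by (simp add: n)
  also have "\<dots> = 0" by (simp add: embedA_def n)
  finally show ?thesis by (auto simp: afrak_def embedA_def)
qed

lemma embed_shift:
  assumes N: "1 \<le> N" and v: "v \<in> afrak N"
  shows "embedA N (\<lambda>i\<in>{..<N-1}. w i + v i) = (\<lambda>i. embedA N w i + v i)"
proof -
  obtain n where n: "N = Suc n" using N by (cases N) auto
  have "(\<Sum>i<N. v i) = 0" using v by (simp add: afrak_def)
  then have vn: "v n = - (\<Sum>i<n. v i)" by (simp add: n)
  have vz: "i \<ge> N \<Longrightarrow> v i = 0" for i using v by (simp add: afrak_def)
  show ?thesis
    by (rule ext) (auto simp: embedA_def n vn sum.distrib vz)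
qed

definition posc :: "nat list \<Rightarrow> real \<Rightarrow> (nat \<Rightarrow> real) \<Rightarrow> bool" where
  "posc ns C z \<longleftrightarrow> (\<forall>k. 1 \<le> k \<and> k < length ns \<longrightarrow> C \<le> (\<Sum>i<cut ns k. z i))"

lemma GG_point:
  assumes N: "1 \<le> sum_list ns"
    and SP: "\<And>z. z \<in> afrak (sum_list ns) \<Longrightarrow> decompA ns z \<in> S \<longleftrightarrow> P z"
    and PD: "\<And>z. P z \<Longrightarrow> inD ns z"
  shows "GG ns S w = (if P (embedA (sum_list ns) w) then ennreal (sqrt (real (sum_list ns)) * FF ns (embedA (sum_list ns) w)) else 0)"
proof -
  let ?z = "embedA (sum_list ns) w"
  have z: "?z \<in> afrak (sum_list ns)" by (rule embed_afrak[OF N])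
  show ?thesis
  proof (cases "P ?z")
    case True
    then have "inD ns ?z" by (rule PD)
    then show ?thesis using True SP[OF z] decomp_AM[OF z] FF_nonneg[of ns ?z]
      by (simp add: GG_def decomp_dens ennreal_mult)
  next
    case False
    then show ?thesis using SP[OF z] by (simp add: GG_def)
  qed
qed

lemma GG_Bplus:
  assumes N: "1 \<le> sum_list ns"
  shows "GG ns (Bplus ns R) w = (if inD ns (embedA (sum_list ns) w) \<and> anorm (sum_list ns) (embedA (sum_list ns) w) \<le> R
     \<and> posc ns 0 (embedA (sum_list ns) w) then ennreal (sqrt (real (sum_list ns)) * FF ns (embedA (sum_list ns) w)) else 0)"
  by (rule GG_point[OF N]) (auto simp: decomp_Bplus posc_def)

lemma GG_BCdiff:
  assumes N: "1 \<le> sum_list ns" and C: "C \<le> 0"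
  shows "GG ns (BCplus ns C R - Bplus ns R) w = (if inD ns (embedA (sum_list ns) w) \<and> anorm (sum_list ns) (embedA (sum_list ns) w) \<le> R
     \<and> posc ns C (embedA (sum_list ns) w) \<and> \<not> posc ns 0 (embedA (sum_list ns) w) then ennreal (sqrt (real (sum_list ns)) * FF ns (embedA (sum_list ns) w)) else 0)"
  by (rule GG_point[OF N]) (auto simp: decomp_Bplus decomp_BC[OF _ C] posc_def)




definition KK :: "nat list \<Rightarrow> real" where
  "KK ns = anorm (sum_list ns) (v0 (sum_list ns))"

lemma KK_nonneg: "0 \<le> KK ns" by (simp add: KK_def anorm_L2)

lemma LL_v0: "LL ns (v0 (sum_list ns)) = (KK ns)\<^sup>2"
proof -
  have "0 \<le> (\<Sum>i<sum_list ns. (v0 (sum_list ns) i)\<^sup>2)" by (intro sum_nonneg) simp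
  then show ?thesis by (simp add: LL_formula KK_def anorm_def power2_eq_square)
qed

lemma inD_shift: "inD ns z \<Longrightarrow> inD ns v \<Longrightarrow> 0 \<le> t \<Longrightarrow> inD ns (\<lambda>i. z i + t * v i)"
  unfolding inD_def by (smt (verit) mult_left_mono)

lemma growth:
  assumes N: "1 \<le> sum_list ns" and t: "0 \<le> t"
  shows "ennreal (exp (t * (KK ns)\<^sup>2)) * emeasure (muA ns) (Bplus ns R) \<le> emeasure (muA ns) (Bplus ns (R + t * KK ns))"
proof -
  let ?N = "sum_list ns"
  let ?v = "\<lambda>i. t * v0 ?N i"
  let ?T = "\<lambda>w. \<lambda>i\<in>{..<?N-1}. w i + ?v i"
  have vaf: "?v \<in> afrak ?N" using v0_afrak[of ?N]
    by (auto simp: afrak_def sum_distrib_left[symmetric])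
  have gm: "GG ns (Bplus ns R') \<in> borel_measurable (PL ?N)" for R'
    by (rule GG_meas) (rule sets_Bplus)
  have "ennreal (exp (t * (KK ns)\<^sup>2)) * emeasure (muA ns) (Bplus ns R)
      = (\<integral>\<^sup>+ w. ennreal (exp (t * (KK ns)\<^sup>2)) * GG ns (Bplus ns R) w \<partial>PL ?N)"
    by (subst nn_integral_cmult[OF gm]) (simp add: muA_GG[OF sets_Bplus])
  also have "\<dots> \<le> (\<integral>\<^sup>+ w. GG ns (Bplus ns (R + t * KK ns)) (?T w) \<partial>PL ?N)"
  proof (rule nn_integral_mono)
    fix w
    let ?z = "embedA ?N w"
    have z': "embedA ?N (?T w) = (\<lambda>i. ?z i + t * v0 ?N i)"
      by (rule embed_shift[OF N vaf])
    show "ennreal (exp (t * (KK ns)\<^sup>2)) * GG ns (Bplus ns R) w \<le> GG ns (Bplus ns (R + t * KK ns)) (?T w)"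
    proof (cases "inD ns ?z \<and> anorm ?N ?z \<le> R \<and> posc ns 0 ?z")
      case False
      have "GG ns (Bplus ns R) w = 0" unfolding GG_Bplus[OF N] by (rule if_not_P[OF False])
      then show ?thesis by simp
    next
      case True
      then have D: "inD ns ?z" and nr: "anorm ?N ?z \<le> R" and ps: "posc ns 0 ?z" by auto
      have D': "inD ns (\<lambda>i. ?z i + t * v0 ?N i)" by (rule inD_shift[OF D v0_inD t])
      have "anorm ?N (\<lambda>i. ?z i + t * v0 ?N i) \<le> anorm ?N ?z + anorm ?N (\<lambda>i. t * v0 ?N i)"
        unfolding anorm_L2 by (rule L2_set_triangle_ineq)
      also have "anorm ?N (\<lambda>i. t * v0 ?N i) = t * KK ns"
        unfolding anorm_L2 KK_def L2_set_right_distrib[OF t] ..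
      finally have nr': "anorm ?N (\<lambda>i. ?z i + t * v0 ?N i) \<le> R + t * KK ns" using nr by simp
      have ps': "posc ns 0 (\<lambda>i. ?z i + t * v0 ?N i)"
        unfolding posc_def
      proof (intro allI impI)
        fix k assume k: "1 \<le> k \<and> k < length ns"
        have "cut ns k \<le> ?N" using cut_mono[of k "length ns" ns] cut_ge[of ns "length ns"] k by simp
        then have "0 \<le> (\<Sum>i<cut ns k. v0 ?N i)" by (rule v0_psum_nonneg)
        moreover have "0 \<le> (\<Sum>i<cut ns k. ?z i)" using ps k unfolding posc_def by auto
        ultimately show "0 \<le> (\<Sum>i<cut ns k. ?z i + t * v0 ?N i)"
          using t by (simp add: sum.distrib sum_distrib_left[symmetric])
      qed
      have "exp (t * LL ns (v0 ?N)) * FF ns ?z \<le> FF ns (\<lambda>i. ?z i + t * v0 ?N i)"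
        by (rule FF_shift[OF D v0_inD t])
      then have ff: "exp (t * (KK ns)\<^sup>2) * (sqrt ?N * FF ns ?z) \<le> sqrt ?N * FF ns (\<lambda>i. ?z i + t * v0 ?N i)"
        unfolding LL_v0 by (simp add: mult.left_commute mult_left_mono)
      show ?thesis
        unfolding GG_Bplus[OF N] z'
        using True D' nr' ps' ff FF_nonneg[OF D]
        by (simp add: ennreal_mult[symmetric] ennreal_leI)
    qed
  qed
  also have "\<dots> = (\<integral>\<^sup>+ w. GG ns (Bplus ns (R + t * KK ns)) w \<partial>PL ?N)"
    by (rule nn_integral_translate[symmetric]) (simp, rule gm)
  also have "\<dots> = emeasure (muA ns) (Bplus ns (R + t * KK ns))"
    by (simp add: muA_GG[OF sets_Bplus])
  finally show ?thesis .
qed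




lemma abs_le_L2: "i < N \<Longrightarrow> \<bar>z i\<bar> \<le> anorm N z"
proof -
  assume i: "i < N"
  have "(z i)\<^sup>2 \<le> (\<Sum>j<N. (z j)\<^sup>2)" using i by (intro member_le_sum) auto
  then have "sqrt ((z i)\<^sup>2) \<le> anorm N z" unfolding anorm_def by (rule real_sqrt_le_mono)
  then show ?thesis by simp
qed

lemma CS: "(\<Sum>i<N. u i * z i) \<le> anorm N u * anorm N z"
proof -
  have "(\<Sum>i<N. u i * z i) \<le> (\<Sum>i<N. \<bar>u i\<bar> * \<bar>z i\<bar>)"
    by (intro sum_mono) (simp add: abs_mult[symmetric])
  also have "\<dots> \<le> anorm N u * anorm N z" unfolding anorm_L2 by (rule L2_set_mult_ineq)
  finally show ?thesis .
qed

lemma LL_le: "LL ns z \<le> KK ns * anorm (sum_list ns) z"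
  unfolding LL_formula KK_def by (rule CS)

lemma strip_LL:
  assumes z: "z \<in> afrak (sum_list ns)" and k: "(\<Sum>i<cut ns k. z i) < 0"
  shows "LL ns z \<le> sqrt ((KK ns)\<^sup>2 - 1) * anorm (sum_list ns) z"
proof -
  let ?N = "sum_list ns"
  let ?m = "cut ns k"
  have mN: "?m \<le> ?N" using cut_mono[of k "max k (length ns)" ns] cut_ge[of ns "max k (length ns)"] by simp
  have "?m \<noteq> ?N" using k z by (auto simp: afrak_def)
  then have mN': "?m < ?N" using mN by simp
  have m0: "?m \<noteq> 0"
  proof
    assume "?m = 0" then show False using k by simp
  qed
  define c where "c = real ?N - real ?m"
  define u where "u i = v0 ?N i - (if i < ?m then c else 0)" for i
  have split: "(\<Sum>i<?N. (if i < ?m then f i else 0)) = (\<Sum>i<?m. f i)" for f :: "nat \<Rightarrow> real"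
  proof -
    have e: "{..<?m} = {i \<in> {..<?N}. i < ?m}" using mN by auto
    have "sum f {i \<in> {..<?N}. i < ?m} = (\<Sum>i<?N. (if i < ?m then f i else 0))"
      by (rule sum.inter_filter) simp
    then show ?thesis unfolding e[symmetric] by simp
  qed
  have "LL ns z = (\<Sum>i<?N. v0 ?N i * z i)" by (rule LL_formula)
  also have "\<dots> = (\<Sum>i<?N. u i * z i) + c * (\<Sum>i<?m. z i)"
  proof -
    have "(\<Sum>i<?N. v0 ?N i * z i) = (\<Sum>i<?N. u i * z i + (if i < ?m then c * z i else 0))"
      by (intro sum.cong refl) (simp add: u_def algebra_simps)
    also have "\<dots> = (\<Sum>i<?N. u i * z i) + c * (\<Sum>i<?m. z i)"
      by (simp add: sum.distrib split sum_distrib_left)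
    finally show ?thesis .
  qed
  also have "\<dots> \<le> (\<Sum>i<?N. u i * z i)"
    using k mN by (simp add: c_def mult_nonneg_nonpos)
  also have "\<dots> \<le> anorm ?N u * anorm ?N z" by (rule CS)
  also have "anorm ?N u \<le> sqrt ((KK ns)\<^sup>2 - 1)"
  proof -
    have "(\<Sum>i<?N. (u i)\<^sup>2) = (\<Sum>i<?N. (v0 ?N i)\<^sup>2 + (if i < ?m then c\<^sup>2 - 2 * c * v0 ?N i else 0))"
      by (intro sum.cong refl) (simp add: u_def power2_eq_square algebra_simps)
    also have "\<dots> = (\<Sum>i<?N. (v0 ?N i)\<^sup>2) + (real ?m * c\<^sup>2 - 2 * c * (\<Sum>i<?m. v0 ?N i))"
      by (simp add: sum.distrib split sum_subtractf sum_distrib_left)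
    also have "\<dots> = (KK ns)\<^sup>2 - real ?m * c\<^sup>2"
    proof -
      have "0 \<le> (\<Sum>i<?N. (v0 ?N i)\<^sup>2)" by (intro sum_nonneg) simp
      then have "(KK ns)\<^sup>2 = (\<Sum>i<?N. (v0 ?N i)\<^sup>2)" by (simp add: KK_def anorm_def)
      moreover have "(\<Sum>i<?m. v0 ?N i) = real ?m * c" using v0_psum[OF mN] by (simp add: c_def)
      ultimately show ?thesis by (simp add: power2_eq_square algebra_simps)
    qed
    also have "\<dots> \<le> (KK ns)\<^sup>2 - 1"
    proof -
      have "1 \<le> c" using mN' by (simp add: c_def)
      then have "1 \<le> c\<^sup>2" by (simp add: one_le_power)
      moreover have "1 \<le> real ?m" using m0 by simp
      ultimately have "1 \<le> real ?m * c\<^sup>2" by (metis mult_mono' mult_1 zero_le_one)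
      then show ?thesis by simp
    qed
    finally show ?thesis unfolding anorm_def by (rule real_sqrt_le_mono)
  qed
  then have "anorm ?N u * anorm ?N z \<le> sqrt ((KK ns)\<^sup>2 - 1) * anorm ?N z"
    by (rule mult_right_mono) (simp add: anorm_L2)
  finally show ?thesis .
qed


lemma box_emeasure:
  assumes R: "0 \<le> R"
  shows "emeasure (PL N) (PiE {..<N-1} (\<lambda>_. {-R..R})) = ennreal ((2*R)^(N-1))"
proof -
  interpret product_sigma_finite "\<lambda>_. lborel::real measure" by standard
  have "emeasure (PL N) (PiE {..<N-1} (\<lambda>_. {-R..R})) = (\<Prod>i<N-1. emeasure lborel {-R..R})"
    by (subst emeasure_PiM) auto
  also have "\<dots> = (\<Prod>i<N-1. ennreal (2 * R))" using R by simp
  also have "\<dots> = ennreal ((2*R)^(N-1))" using R by (simp add: ennreal_power)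
  finally show ?thesis .
qed

lemma in_box:
  assumes N: "1 \<le> N" and w: "w \<in> space (PL N)" and R: "anorm N (embedA N w) \<le> R"
  shows "w \<in> PiE {..<N-1} (\<lambda>_. {-R..R})"
proof -
  have "\<bar>w i\<bar> \<le> R" if i: "i < N - 1" for i
  proof -
    have "w i = embedA N w i" using i by (simp add: embedA_def)
    also have "\<bar>\<dots>\<bar> \<le> anorm N (embedA N w)" using i N by (intro abs_le_L2) simp
    finally show ?thesis using R by simp
  qed
  then have "w i \<in> {-R..R}" if "i < N - 1" for i
  proof -
    have "\<bar>w i\<bar> \<le> R" using that by (rule \<open>\<And>i. i < N - 1 \<Longrightarrow> \<bar>w i\<bar> \<le> R\<close>)
    then show ?thesis by (simp add: abs_le_iff)
  qed
  then show ?thesis using w by (auto simp: space_PiM PiE_def Pi_def)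
qed

lemma meas_upper:
  assumes S: "S \<in> sets (PB \<Otimes>\<^sub>M PB)" and R: "0 \<le> R"
    and pt: "\<And>w. w \<in> space (PL (sum_list ns)) \<Longrightarrow> GG ns S w \<le> ennreal c * indicator (PiE {..<sum_list ns - 1} (\<lambda>_. {-R..R})) w"
  shows "emeasure (muA ns) S \<le> ennreal c * ennreal ((2*R)^(sum_list ns - 1))"
proof -
  let ?B = "PiE {..<sum_list ns - 1} (\<lambda>_. {-R..R::real})"
  have Bs: "?B \<in> sets (PL (sum_list ns))" by (intro sets_PiM_I_finite) auto
  have "emeasure (muA ns) S = (\<integral>\<^sup>+ w. GG ns S w \<partial>PL (sum_list ns))" by (rule muA_GG[OF S])
  also have "\<dots> \<le> (\<integral>\<^sup>+ w. ennreal c * indicator ?B w \<partial>PL (sum_list ns))"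
    by (rule nn_integral_mono) (rule pt)
  also have "\<dots> = ennreal c * emeasure (PL (sum_list ns)) ?B"
    using Bs by (rule nn_integral_cmult_indicator)
  also have "\<dots> = ennreal c * ennreal ((2*R)^(sum_list ns - 1))" unfolding box_emeasure[OF R] ..
  finally show ?thesis .
qed

lemma GG_Ba:
  assumes N: "1 \<le> sum_list ns"
  shows "GG ns (Ba ns R) w = (if inD ns (embedA (sum_list ns) w) \<and> anorm (sum_list ns) (embedA (sum_list ns) w) \<le> R
     then ennreal (sqrt (real (sum_list ns)) * FF ns (embedA (sum_list ns) w)) else 0)"
  by (rule GG_point[OF N]) (auto simp: decomp_Ba)

lemma Ba_finite:
  assumes N: "1 \<le> sum_list ns" and R: "0 \<le> R"
  shows "emeasure (muA ns) (Ba ns R) \<le> ennreal (sqrt (real (sum_list ns)) * exp (KK ns * R)) * ennreal ((2*R)^(sum_list ns - 1))"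
proof (rule meas_upper[OF sets_Ba R])
  fix w assume w: "w \<in> space (PL (sum_list ns))"
  let ?z = "embedA (sum_list ns) w"
  show "GG ns (Ba ns R) w \<le> ennreal (sqrt (real (sum_list ns)) * exp (KK ns * R)) * indicator (PiE {..<sum_list ns - 1} (\<lambda>_. {-R..R})) w"
  proof (cases "inD ns ?z \<and> anorm (sum_list ns) ?z \<le> R")
    case True
    have "FF ns ?z \<le> exp (LL ns ?z)" using True by (intro FF_upper) simp
    also have "\<dots> \<le> exp (KK ns * R)"
    proof -
      have "KK ns * anorm (sum_list ns) ?z \<le> KK ns * R"
        by (rule mult_left_mono) (use True KK_nonneg in auto)
      then show ?thesis using LL_le[of ns ?z] by simp
    qed
    finally have "sqrt (real (sum_list ns)) * FF ns ?z \<le> sqrt (real (sum_list ns)) * exp (KK ns * R)"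
      by (simp add: mult_left_mono)
    then show ?thesis using True in_box[OF N w, of R]
      unfolding GG_Ba[OF N] by (simp add: ennreal_leI)
  next
    case False
    show ?thesis unfolding GG_Ba[OF N] if_not_P[OF False] by simp
  qed
qed

lemma KK_ge1: "2 \<le> sum_list ns \<Longrightarrow> 1 \<le> (KK ns)\<^sup>2"
proof -
  assume N2: "2 \<le> sum_list ns"
  have "0 \<le> (\<Sum>i<sum_list ns. (v0 (sum_list ns) i)\<^sup>2)" by (intro sum_nonneg) simp
  then have K: "(KK ns)\<^sup>2 = (\<Sum>i<sum_list ns. (v0 (sum_list ns) i)\<^sup>2)" by (simp add: KK_def anorm_def)
  have "(v0 (sum_list ns) 0)\<^sup>2 \<le> (\<Sum>i<sum_list ns. (v0 (sum_list ns) i)\<^sup>2)"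
    using N2 by (intro member_le_sum) auto
  moreover have "1 \<le> v0 (sum_list ns) 0" using N2 by (simp add: v0_def)
  then have "1 \<le> (v0 (sum_list ns) 0)\<^sup>2" by (simp add: one_le_power)
  ultimately show ?thesis using K by simp
qed

lemma BCdiff_bound:
  assumes N2: "2 \<le> sum_list ns" and R: "0 \<le> R" and C: "C \<le> 0"
  shows "emeasure (muA ns) (BCplus ns C R - Bplus ns R) \<le> ennreal (sqrt (real (sum_list ns)) * exp (sqrt ((KK ns)\<^sup>2 - 1) * R)) * ennreal ((2*R)^(sum_list ns - 1))"
proof (rule meas_upper[OF _ R])
  show "BCplus ns C R - Bplus ns R \<in> sets (PB \<Otimes>\<^sub>M PB)" using sets_BCplus sets_Bplus by blast
next
  fix w assume w: "w \<in> space (PL (sum_list ns))"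
  have N: "1 \<le> sum_list ns" using N2 by simp
  let ?z = "embedA (sum_list ns) w"
  let ?K' = "sqrt ((KK ns)\<^sup>2 - 1)"
  show "GG ns (BCplus ns C R - Bplus ns R) w \<le> ennreal (sqrt (real (sum_list ns)) * exp (?K' * R)) * indicator (PiE {..<sum_list ns - 1} (\<lambda>_. {-R..R})) w"
  proof (cases "inD ns ?z \<and> anorm (sum_list ns) ?z \<le> R \<and> posc ns C ?z \<and> \<not> posc ns 0 ?z")
    case True
    then have "\<not> posc ns 0 ?z" by simp
    then obtain k where "\<not> 0 \<le> (\<Sum>i<cut ns k. ?z i)" unfolding posc_def by blast
    then have k: "(\<Sum>i<cut ns k. ?z i) < 0" by simp
    have K'0: "0 \<le> ?K'" using KK_ge1[OF N2] by simp
    have "FF ns ?z \<le> exp (LL ns ?z)" using True by (intro FF_upper) simp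
    also have "\<dots> \<le> exp (?K' * R)"
    proof -
      have "?K' * anorm (sum_list ns) ?z \<le> ?K' * R"
        by (rule mult_left_mono) (use True K'0 in auto)
      then show ?thesis using strip_LL[OF embed_afrak[OF N] k] by simp
    qed
    finally have "sqrt (real (sum_list ns)) * FF ns ?z \<le> sqrt (real (sum_list ns)) * exp (?K' * R)"
      by (simp add: mult_left_mono)
    then show ?thesis using True in_box[OF N w, of R]
      unfolding GG_BCdiff[OF N C] by (simp add: ennreal_leI)
  next
    case False
    show ?thesis unfolding GG_BCdiff[OF N C] if_not_P[OF False] by simp
  qed
qed




lemma pos_box:
  assumes N2: "2 \<le> sum_list ns"
  shows "0 < emeasure (muA ns) (Bplus ns (real (sum_list ns) ^ 3))"
proof -
  let ?N = "sum_list ns"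
  let ?n = "?N - 1"
  let ?R0 = "real ?N ^ 3"
  let ?B = "PiE {..<?n} (\<lambda>i. {v0 ?N i .. v0 ?N i + 1/2})"
  have N: "1 \<le> ?N" using N2 by simp
  have gm: "GG ns (Bplus ns ?R0) \<in> borel_measurable (PL ?N)"
    by (rule GG_meas) (rule sets_Bplus)
  have Bs: "?B \<in> sets (PL ?N)" by (intro sets_PiM_I_finite) auto
  have Bpos: "emeasure (PL ?N) ?B = ennreal ((1/2)^?n)"
  proof -
    interpret product_sigma_finite "\<lambda>_. lborel::real measure" by standard
    have "emeasure (PL ?N) ?B = (\<Prod>i<?n. emeasure lborel {v0 ?N i .. v0 ?N i + 1/2})"
      by (subst emeasure_PiM) auto
    also have "\<dots> = (\<Prod>i<?n. ennreal (1/2))" by simp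
    also have "\<dots> = ennreal (1/2) ^ ?n" by (simp only: prod_constant card_lessThan)
    also have "\<dots> = ennreal ((1/2)^?n)" by (rule ennreal_power) simp
    finally show ?thesis .
  qed
  have GGpos: "GG ns (Bplus ns ?R0) w \<noteq> 0" if w: "w \<in> ?B" for w
  proof -
    let ?z = "embedA ?N w"
    have wb: "v0 ?N i \<le> w i \<and> w i \<le> v0 ?N i + 1/2" if "i < ?n" for i
      using w that by (auto simp: PiE_def Pi_def)
    have zlo: "v0 ?N i \<le> ?z i" if "i < ?n" for i using wb[OF that] that by (simp add: embedA_def)
    have vsum: "(\<Sum>j<?n. v0 ?N j) = real ?n * (real ?N - real ?n)" by (rule v0_psum) simp
    have zn: "?z ?n \<le> v0 ?N ?n"
    proof -
      have "(\<Sum>j<?n. v0 ?N j) \<le> (\<Sum>j<?n. w j)" using wb by (intro sum_mono) auto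
      then show ?thesis using vsum N by (simp add: embedA_def v0_def of_nat_diff)
    qed
    have zhi: "?z j \<le> v0 ?N j + 1/2" if "j < ?N" for j
    proof (cases "j < ?n")
      case True then show ?thesis using wb[OF True] by (simp add: embedA_def)
    next
      case False then have "j = ?n" using that by simp
      then show ?thesis using zn by simp
    qed
    have strict: "?z j < ?z i" if "i < j" "j < ?N" for i j
    proof -
      have "i < ?n" using that by simp
      have "?z j \<le> v0 ?N j + 1/2" using zhi that by simp
      also have "\<dots> < v0 ?N j + 2" by simp
      also have "\<dots> \<le> v0 ?N i" using v0_gap that by simp
      also have "\<dots> \<le> ?z i" using zlo \<open>i < ?n\<close> by simp
      finally show ?thesis .
    qed
    have D: "inD ns ?z" unfolding inD_def using strict same_blk_lt by (meson less_imp_le)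
    have FP: "0 < FF ns ?z" by (rule FF_pos) (use strict same_blk_lt in blast)
    have PS: "posc ns 0 ?z" unfolding posc_def
    proof (intro allI impI)
      fix k assume "1 \<le> k \<and> k < length ns"
      have mN: "cut ns k \<le> ?N" using cut_mono[of k "length ns" ns] cut_ge[of ns "length ns"] \<open>1 \<le> k \<and> k < length ns\<close> by simp
      show "0 \<le> (\<Sum>i<cut ns k. ?z i)"
      proof (cases "cut ns k = ?N")
        case True then show ?thesis using embed_afrak[OF N, of w] by (simp add: afrak_def)
      next
        case False
        then have mn: "cut ns k \<le> ?n" using mN by simp
        have "0 \<le> (\<Sum>i<cut ns k. v0 ?N i)" using mN by (rule v0_psum_nonneg)
        also have "\<dots> \<le> (\<Sum>i<cut ns k. ?z i)" using zlo mn by (intro sum_mono) auto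
        finally show ?thesis .
      qed
    qed
    have wabs: "\<bar>w i\<bar> \<le> real ?N" if "i < ?n" for i
    proof -
      have "v0 ?N i \<le> real ?N - 1" "- real ?N + 1 \<le> v0 ?N i" using that by (auto simp: v0_def)
      then show ?thesis using wb[OF that] by (simp add: abs_le_iff)
    qed
    have zabs: "\<bar>?z i\<bar> \<le> real ?N ^ 2" if "i < ?N" for i
    proof -
      have sw: "(\<Sum>j<?n. \<bar>w j\<bar>) \<le> real ?n * real ?N"
        using sum_mono[of "{..<?n}" "\<lambda>j. \<bar>w j\<bar>" "\<lambda>_. real ?N"] wabs by simp
      also have "\<dots> \<le> real ?N ^ 2" by (simp add: power2_eq_square mult_right_mono)
      finally have sw2: "(\<Sum>j<?n. \<bar>w j\<bar>) \<le> real ?N ^ 2" .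
      show ?thesis
      proof (cases "i < ?n")
        case True
        have "\<bar>?z i\<bar> = \<bar>w i\<bar>" using True by (simp add: embedA_def)
        also have "\<dots> \<le> (\<Sum>j<?n. \<bar>w j\<bar>)" using True by (intro member_le_sum) auto
        finally show ?thesis using sw2 by simp
      next
        case False then have "i = ?n" using that by simp
        then have "\<bar>?z i\<bar> = \<bar>\<Sum>j<?n. w j\<bar>" by (simp add: embedA_def)
        also have "\<dots> \<le> (\<Sum>j<?n. \<bar>w j\<bar>)" by (rule sum_abs)
        finally show ?thesis using sw2 by simp
      qed
    qed
    have "anorm ?N ?z \<le> (\<Sum>i<?N. \<bar>?z i\<bar>)" unfolding anorm_L2 by (rule L2_set_le_sum_abs)
    also have "\<dots> \<le> (\<Sum>i<?N. real ?N ^ 2)" using zabs by (intro sum_mono) auto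
    also have "\<dots> = ?R0" by (simp add: power2_eq_square power3_eq_cube)
    finally have nr: "anorm ?N ?z \<le> ?R0" .
    have sp: "0 < sqrt (real ?N) * FF ns ?z" using FP N by simp
    have cnd: "inD ns ?z \<and> anorm ?N ?z \<le> ?R0 \<and> posc ns 0 ?z" using D nr PS by simp
    show ?thesis unfolding GG_Bplus[OF N] if_P[OF cnd] using sp ennreal_eq_0_iff by (metis not_le)
  qed
  show ?thesis
  proof (rule ccontr)
    assume "\<not> 0 < emeasure (muA ns) (Bplus ns ?R0)"
    then have "(\<integral>\<^sup>+ w. GG ns (Bplus ns ?R0) w \<partial>PL ?N) = 0"
      by (simp add: muA_GG[OF sets_Bplus])
    then have "AE w in PL ?N. GG ns (Bplus ns ?R0) w = 0"
      using nn_integral_0_iff_AE[OF gm] by simp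
    then obtain Z where Z: "{w \<in> space (PL ?N). \<not> GG ns (Bplus ns ?R0) w = 0} \<subseteq> Z"
       "emeasure (PL ?N) Z = 0" "Z \<in> sets (PL ?N)"
      by (rule AE_E)
    have "?B \<subseteq> Z" using Z(1) GGpos Bs sets.sets_into_space by blast
    then have "emeasure (PL ?N) ?B \<le> emeasure (PL ?N) Z" by (intro emeasure_mono) (use Z in auto)
    then have "emeasure (PL ?N) ?B = 0" using Z by auto
    then show False unfolding Bpos by simp
  qed
qed




lemma Bplus_sub_Ba: "Bplus ns R \<subseteq> Ba ns R" by (simp add: Bplus_def)
lemma BC_sub_Ba: "BCplus ns C R \<subseteq> Ba ns R" by (auto simp: BCplus_def)
lemma Bplus_mono: "R1 \<le> R2 \<Longrightarrow> Bplus ns R1 \<subseteq> Bplus ns R2" by (auto simp: Bplus_def Ba_def)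

lemma sets_muA[simp]: "sets (muA ns) = sets (PB \<Otimes>\<^sub>M PB)"
  by (simp add: muA_def)

lemma fin_Ba: "1 \<le> sum_list ns \<Longrightarrow> 0 \<le> R \<Longrightarrow> emeasure (muA ns) (Ba ns R) \<noteq> \<infinity>"
  using Ba_finite[of ns R] by (auto simp: top_unique ennreal_mult_eq_top_iff)

lemma fin_sub: "1 \<le> sum_list ns \<Longrightarrow> 0 \<le> R \<Longrightarrow> S \<subseteq> Ba ns R \<Longrightarrow> emeasure (muA ns) S \<noteq> \<infinity>"
  using fin_Ba[of ns R] emeasure_mono[of S "Ba ns R" "muA ns"] sets_Ba[of ns R]
  by (auto simp: top_unique)


lemma growth_real:
  assumes N: "1 \<le> sum_list ns" and t: "0 \<le> t" and R: "0 \<le> R"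
  shows "exp (t * (KK ns)\<^sup>2) * measure (muA ns) (Bplus ns R) \<le> measure (muA ns) (Bplus ns (R + t * KK ns))"
proof -
  have R': "0 \<le> R + t * KK ns" using R t KK_nonneg[of ns] by simp
  have f1: "emeasure (muA ns) (Bplus ns R) \<noteq> \<infinity>" by (rule fin_sub[OF N R Bplus_sub_Ba])
  have f2: "emeasure (muA ns) (Bplus ns (R + t * KK ns)) \<noteq> \<infinity>" by (rule fin_sub[OF N R' Bplus_sub_Ba])
  have "ennreal (exp (t * (KK ns)\<^sup>2)) * ennreal (measure (muA ns) (Bplus ns R)) \<le> ennreal (measure (muA ns) (Bplus ns (R + t * KK ns)))"
    using growth[OF N t, of R] f1 f2 by (simp add: emeasure_eq_ennreal_measure)
  then show ?thesis by (simp add: ennreal_mult[symmetric] ennreal_le_iff)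
qed

lemma BC_split:
  assumes N: "1 \<le> sum_list ns" and C: "C \<le> 0"
  shows "emeasure (muA ns) (BCplus ns C R) = emeasure (muA ns) (Bplus ns R) + emeasure (muA ns) (BCplus ns C R - Bplus ns R)"
proof -
  have "emeasure (muA ns) (BCplus ns C R) = emeasure (muA ns) (BCplus ns C R \<inter> Bplus ns R) + emeasure (muA ns) (BCplus ns C R - Bplus ns R)"
    using sets_BCplus[of ns C R] sets_Bplus[of ns R]
    by (subst plus_emeasure) (auto intro: arg_cong[where f="emeasure (muA ns)"])
  also have "emeasure (muA ns) (BCplus ns C R \<inter> Bplus ns R) = emeasure (muA ns) (Bplus ns R)"
  proof -
    have "GG ns (BCplus ns C R \<inter> Bplus ns R) w = GG ns (Bplus ns R) w" for w
    proof -
      have z: "embedA (sum_list ns) w \<in> afrak (sum_list ns)" by (rule embed_afrak[OF N])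
      have "decompA ns (embedA (sum_list ns) w) \<in> BCplus ns C R \<inter> Bplus ns R \<longleftrightarrow> decompA ns (embedA (sum_list ns) w) \<in> Bplus ns R"
        using decomp_BC[OF z C, of R] decomp_Bplus[OF z, of R] C by fastforce
      then show ?thesis unfolding GG_def indicator_def by simp
    qed
    then show ?thesis
      using sets_BCplus[of ns C R] sets_Bplus[of ns R]
      by (simp add: muA_GG Int)
  qed
  finally show ?thesis .
qed

lemma tendsto_poly_exp:
  assumes g: "0 < (g::real)"
  shows "((\<lambda>R. R ^ n * exp (- g * R)) \<longlongrightarrow> 0) at_top"
proof -
  have lim: "filterlim (\<lambda>R. g * R) at_top at_top"
    by (rule filterlim_tendsto_pos_mult_at_top[OF tendsto_const g filterlim_ident])
  have "((\<lambda>R. (g * R) ^ n / exp (g * R)) \<longlongrightarrow> 0) at_top"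
    using filterlim_compose[OF tendsto_power_div_exp_0 lim] by (simp add: o_def)
  then have "((\<lambda>R. (g * R) ^ n / exp (g * R) / g ^ n) \<longlongrightarrow> 0 / g ^ n) at_top"
    using g by (intro tendsto_divide tendsto_const) simp_all
  moreover have "(g * R) ^ n / exp (g * R) / g ^ n = R ^ n * exp (- g * R)" for R
    using g by (simp add: power_mult_distrib exp_minus field_simps)
  ultimately show ?thesis by simp
qed




lemma common:
  assumes N2: "2 \<le> sum_list ns"
  shows "0 < KK ns" "sqrt ((KK ns)\<^sup>2 - 1) < KK ns" "0 < measure (muA ns) (Bplus ns (real (sum_list ns) ^ 3))"
proof -
  have K1: "1 \<le> (KK ns)\<^sup>2" by (rule KK_ge1[OF N2])
  then show K0: "0 < KK ns" using KK_nonneg[of ns] by (cases "KK ns = 0") auto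
  have "sqrt ((KK ns)\<^sup>2 - 1) < sqrt ((KK ns)\<^sup>2)" by (rule real_sqrt_less_mono) simp
  then show "sqrt ((KK ns)\<^sup>2 - 1) < KK ns" using K0 by simp
  have N: "1 \<le> sum_list ns" using N2 by simp
  have f: "emeasure (muA ns) (Bplus ns (real (sum_list ns) ^ 3)) \<noteq> \<infinity>"
    by (rule fin_sub[OF N _ Bplus_sub_Ba]) simp
  show "0 < measure (muA ns) (Bplus ns (real (sum_list ns) ^ 3))"
    using pos_box[OF N2] f by (simp add: emeasure_eq_ennreal_measure)
qed

lemma lower_growth:
  assumes N2: "2 \<le> sum_list ns" and R: "R0 \<le> R" and R0: "0 \<le> R0"
  shows "exp ((R - R0) * KK ns) * measure (muA ns) (Bplus ns R0) \<le> measure (muA ns) (Bplus ns R)"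
proof -
  have N: "1 \<le> sum_list ns" using N2 by simp
  have K0: "0 < KK ns" by (rule common(1)[OF N2])
  let ?t = "(R - R0) / KK ns"
  have t: "0 \<le> ?t" using R K0 by simp
  have "exp (?t * (KK ns)\<^sup>2) * measure (muA ns) (Bplus ns R0) \<le> measure (muA ns) (Bplus ns (R0 + ?t * KK ns))"
    by (rule growth_real[OF N t R0])
  moreover have "?t * (KK ns)\<^sup>2 = (R - R0) * KK ns" using K0 by (simp add: power2_eq_square)
  moreover have "R0 + ?t * KK ns = R" using K0 by simp
  ultimately show ?thesis by simp
qed

lemma part1:
  assumes N2: "2 \<le> sum_list ns" and C: "C < 0"
  shows "((\<lambda>R. measure (muA ns) (BCplus ns C R) / measure (muA ns) (Bplus ns R)) \<longlongrightarrow> 1) at_top"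
proof -
  have N: "1 \<le> sum_list ns" using N2 by simp
  define K where "K = KK ns"
  define K' where "K' = sqrt ((KK ns)\<^sup>2 - 1)"
  define R0 :: real where "R0 = real (sum_list ns) ^ 3"
  define m0 where "m0 = measure (muA ns) (Bplus ns R0)"
  define n where "n = sum_list ns - 1"
  define g where "g = K - K'"
  define c where "c = sqrt (real (sum_list ns)) * 2 ^ n * exp (R0 * K) / m0"
  have K0: "0 < K" and KK': "K' < K" and m0: "0 < m0"
    using common[OF N2] by (auto simp: K_def K'_def m0_def R0_def)
  have g: "0 < g" using KK' by (simp add: g_def)
  have R00: "0 \<le> R0" by (simp add: R0_def)
  define q where "q R = measure (muA ns) (BCplus ns C R - Bplus ns R) / measure (muA ns) (Bplus ns R)" for R
  have ev: "eventually (\<lambda>R. measure (muA ns) (BCplus ns C R) / measure (muA ns) (Bplus ns R) = 1 + q R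
       \<and> 0 \<le> q R \<and> q R \<le> c * (R ^ n * exp (- g * R))) at_top"
    using eventually_ge_at_top[of R0]
  proof eventually_elim
    case (elim R)
    have R: "0 \<le> R" using elim R00 by simp
    let ?mB = "measure (muA ns) (Bplus ns R)"
    let ?d = "measure (muA ns) (BCplus ns C R - Bplus ns R)"
    have fB: "emeasure (muA ns) (Bplus ns R) \<noteq> top" using fin_sub[OF N R Bplus_sub_Ba] by simp
    have fD: "emeasure (muA ns) (BCplus ns C R - Bplus ns R) \<noteq> top"
      using fin_sub[OF N R, of "BCplus ns C R - Bplus ns R"] BC_sub_Ba by auto
    have lg: "exp ((R - R0) * K) * m0 \<le> ?mB"
      unfolding K_def m0_def by (rule lower_growth[OF N2 elim R00])
    have lgp: "0 < exp ((R - R0) * K) * m0" using m0 by simp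
    have mBp: "0 < ?mB" using lg lgp by linarith
    have e: "emeasure (muA ns) (BCplus ns C R) = ennreal (?mB + ?d)"
      unfolding BC_split[OF N, of C R, OF less_imp_le[OF C]] emeasure_eq_ennreal_measure[OF fB] emeasure_eq_ennreal_measure[OF fD]
      by (rule ennreal_plus[symmetric]) (simp_all add: measure_nonneg)
    have split: "measure (muA ns) (BCplus ns C R) = ?mB + ?d"
      unfolding measure_def[of "muA ns" "BCplus ns C R"] e
      by (intro enn2real_ennreal add_nonneg_nonneg measure_nonneg)
    have dle: "?d \<le> sqrt (real (sum_list ns)) * exp (K' * R) * (2 * R) ^ n"
    proof -
      have "emeasure (muA ns) (BCplus ns C R - Bplus ns R) \<le> ennreal (sqrt (real (sum_list ns)) * exp (K' * R)) * ennreal ((2 * R) ^ n)"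
        unfolding K'_def n_def by (rule BCdiff_bound[OF N2 R]) (use C in simp)
      also have "\<dots> = ennreal (sqrt (real (sum_list ns)) * exp (K' * R) * (2 * R) ^ n)"
        by (rule ennreal_mult[symmetric]) (use R in simp_all)
      finally have "ennreal ?d \<le> ennreal (sqrt (real (sum_list ns)) * exp (K' * R) * (2 * R) ^ n)"
        unfolding emeasure_eq_ennreal_measure[OF fD] .
      then show ?thesis using R by (subst (asm) ennreal_le_iff) simp_all
    qed
    have d0: "0 \<le> ?d" by simp
    have eq1: "measure (muA ns) (BCplus ns C R) / ?mB = 1 + q R"
      using mBp by (simp add: split q_def field_simps)
    have q0: "0 \<le> q R" using mBp by (simp add: q_def)
    have "q R \<le> ?d / (exp ((R - R0) * K) * m0)"
      unfolding q_def by (rule divide_left_mono[OF lg d0]) (use lgp mBp in simp)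
    also have "\<dots> \<le> sqrt (real (sum_list ns)) * exp (K' * R) * (2 * R) ^ n / (exp ((R - R0) * K) * m0)"
      by (rule divide_right_mono[OF dle]) (use lgp in simp)
    also have "\<dots> = c * (R ^ n * exp (- g * R))"
    proof -
      have "K' * R = R0 * K + (- g * R) + (R - R0) * K" by (simp add: g_def algebra_simps)
      then have "exp (K' * R) = exp (R0 * K) * exp (- g * R) * exp ((R - R0) * K)"
        by (simp add: exp_add[symmetric])
      then show ?thesis using m0 by (simp add: c_def power_mult_distrib field_simps)
    qed
    finally show ?case using eq1 q0 by simp
  qed
  have "((\<lambda>R. c * (R ^ n * exp (- g * R))) \<longlongrightarrow> c * 0) at_top"
    by (intro tendsto_mult tendsto_const tendsto_poly_exp g)
  then have limh: "((\<lambda>R. c * (R ^ n * exp (- g * R))) \<longlongrightarrow> 0) at_top" by simp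
  have lim0: "(q \<longlongrightarrow> 0) at_top"
  proof (rule tendsto_sandwich[of "\<lambda>_. 0" q at_top "\<lambda>R. c * (R ^ n * exp (- g * R))"])
    show "eventually (\<lambda>R. 0 \<le> q R) at_top" using ev by (rule eventually_mono) blast
    show "eventually (\<lambda>R. q R \<le> c * (R ^ n * exp (- g * R))) at_top" using ev by (rule eventually_mono) blast
    show "((\<lambda>_. 0) \<longlongrightarrow> (0::real)) at_top" by (rule tendsto_const)
    show "((\<lambda>R. c * (R ^ n * exp (- g * R))) \<longlongrightarrow> 0) at_top" by (rule limh)
  qed
  have lim1: "((\<lambda>R. 1 + q R) \<longlongrightarrow> 1 + 0) at_top" by (intro tendsto_add tendsto_const lim0)
  have ev2: "eventually (\<lambda>R. 1 + q R = measure (muA ns) (BCplus ns C R) / measure (muA ns) (Bplus ns R)) at_top"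
    using ev by (rule eventually_mono) (simp only:)
  show ?thesis using Lim_transform_eventually[OF lim1 ev2] by simp
qed


lemma part2:
  assumes N2: "2 \<le> sum_list ns" and e0: "0 < \<epsilon>" and e1: "\<epsilon> < 1"
  shows "Limsup at_top (\<lambda>R::real. emeasure (muA ns) (Bplus ns R) / emeasure (muA ns) (Bplus_delta ns R (1/2)))
           \<le> ennreal (min (1 + \<epsilon>) (1 / (1 - \<epsilon>)))"
proof -
  have N: "1 \<le> sum_list ns" using N2 by simp
  define K where "K = KK ns"
  define R0 :: real where "R0 = real (sum_list ns) ^ 3"
  define \<eta> where "\<eta> = \<epsilon> / (1 + \<epsilon>)"
  have K0: "0 < K" using common(1)[OF N2] by (simp add: K_def)
  have m0: "0 < measure (muA ns) (Bplus ns R0)" using common(3)[OF N2] by (simp add: R0_def)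
  have R00: "0 \<le> R0" by (simp add: R0_def)
  have eta: "0 < \<eta>" using e0 by (simp add: \<eta>_def)
  have "((\<lambda>R. R ^ 0 * exp (- (K/2) * R)) \<longlongrightarrow> 0) at_top" by (rule tendsto_poly_exp) (use K0 in simp)
  then have "eventually (\<lambda>R. R ^ 0 * exp (- (K/2) * R) < \<eta>) at_top" using eta by (rule order_tendstoD)
  then have evexp: "eventually (\<lambda>R. exp (- (K/2) * R) < \<eta>) at_top" by simp
  have minq: "min (1 + \<epsilon>) (1 / (1 - \<epsilon>)) = 1 + \<epsilon>"
  proof -
    have "(1 + \<epsilon>) * (1 - \<epsilon>) \<le> 1" by (simp add: algebra_simps)
    then have "1 + \<epsilon> \<le> 1 / (1 - \<epsilon>)" using e1 by (simp add: field_simps)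
    then show ?thesis by simp
  qed
  have "eventually (\<lambda>R. emeasure (muA ns) (Bplus ns R) / emeasure (muA ns) (Bplus_delta ns R (1/2)) \<le> ennreal (1 + \<epsilon>)) at_top"
    using evexp eventually_ge_at_top[of R0]
  proof eventually_elim
    case (elim R)
    have R: "0 \<le> R" using elim R00 by simp
    let ?x = "measure (muA ns) (Bplus ns R)"
    let ?y = "measure (muA ns) (Bplus ns (1/2 * R))"
    have fx: "emeasure (muA ns) (Bplus ns R) \<noteq> top" using fin_sub[OF N R Bplus_sub_Ba] by simp
    have xpos: "0 < ?x"
    proof -
      have "exp ((R - R0) * KK ns) * measure (muA ns) (Bplus ns R0) \<le> ?x"
        by (rule lower_growth[OF N2 elim(2) R00])
      moreover have "0 < exp ((R - R0) * KK ns) * measure (muA ns) (Bplus ns R0)" using m0 by simp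
      ultimately show ?thesis by linarith
    qed
    have gy: "exp (R * K / 2) * ?y \<le> ?x"
    proof -
      have "exp ((R - 1/2 * R) * KK ns) * ?y \<le> ?x"
        by (rule lower_growth[OF N2]) (use R in simp_all)
      then show ?thesis by (simp add: K_def algebra_simps)
    qed
    have y0: "0 \<le> ?y" by simp
    have yle: "?y \<le> \<eta> * ?x"
    proof -
      have "?y = exp (- (K/2) * R) * (exp (R * K / 2) * ?y)" by (simp add: exp_add[symmetric] algebra_simps)
      also have "\<dots> \<le> exp (- (K/2) * R) * ?x" by (rule mult_left_mono[OF gy]) simp
      also have "\<dots> \<le> \<eta> * ?x" using elim(1) xpos by (intro mult_right_mono) simp_all
      finally show ?thesis .
    qed
    have sub: "Bplus ns (1/2 * R) \<subseteq> Bplus ns R" by (rule Bplus_mono) (use R in simp)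
    have diff: "measure (muA ns) (Bplus_delta ns R (1/2)) = ?x - ?y"
      unfolding Bplus_delta_def using fx sets_Bplus sub by (intro measure_Diff) auto
    have fd: "emeasure (muA ns) (Bplus_delta ns R (1/2)) \<noteq> top"
      using fin_sub[OF N R, of "Bplus_delta ns R (1/2)"] Bplus_sub_Ba[of ns R] by (auto simp: Bplus_delta_def)
    have etalt: "\<eta> < 1" using e0 by (simp add: \<eta>_def)
    have dpos: "0 < ?x - ?y" using yle xpos etalt
      by (smt (verit) mult_less_cancel_right2)
    have "emeasure (muA ns) (Bplus ns R) / emeasure (muA ns) (Bplus_delta ns R (1/2)) = ennreal ?x / ennreal (?x - ?y)"
      unfolding emeasure_eq_ennreal_measure[OF fx] emeasure_eq_ennreal_measure[OF fd] diff ..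
    also have "\<dots> = ennreal (?x / (?x - ?y))" by (rule divide_ennreal) (use dpos in simp_all)
    also have "\<dots> \<le> ennreal (1 + \<epsilon>)"
    proof (rule ennreal_leI)
      have "(1 + \<epsilon>) * ?y \<le> \<epsilon> * ?x" using yle e0 by (simp add: \<eta>_def field_simps)
      then have "?x \<le> (1 + \<epsilon>) * (?x - ?y)" by (simp add: algebra_simps)
      then show "?x / (?x - ?y) \<le> 1 + \<epsilon>" using dpos by (simp add: divide_le_eq)
    qed
    finally show ?case .
  qed
  then have "Limsup at_top (\<lambda>R::real. emeasure (muA ns) (Bplus ns R) / emeasure (muA ns) (Bplus_delta ns R (1/2))) \<le> ennreal (1 + \<epsilon>)"
    by (rule Limsup_bounded)
  then show ?thesis unfolding minq .
qed


theorem lemma4p13: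
  fixes N :: nat and ns :: "nat list"
  assumes "N \<ge> 2" and "valid_partition ns N"
  shows "(\<forall>C::real. C < 0 \<longrightarrow>
           ((\<lambda>R. measure (muA ns) (BCplus ns C R) / measure (muA ns) (Bplus ns R))
              \<longlongrightarrow> 1) at_top)
       \<and> (\<forall>\<epsilon>::real. 0 < \<epsilon> \<and> \<epsilon> < 1 \<longrightarrow>
           (\<exists>\<delta>::real. \<delta> > 0 \<and>
              Limsup at_top (\<lambda>R::real. emeasure (muA ns) (Bplus ns R)
                                     / emeasure (muA ns) (Bplus_delta ns R \<delta>))
                \<le> ennreal (min (1 + \<epsilon>) (1 / (1 - \<epsilon>)))))"
proof -
  have N2: "2 \<le> sum_list ns" using assms by (simp add: valid_partition_def)
  show ?thesis
  proof (intro conjI allI impI)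
    fix C :: real assume "C < 0"
    then show "((\<lambda>R. measure (muA ns) (BCplus ns C R) / measure (muA ns) (Bplus ns R)) \<longlongrightarrow> 1) at_top"
      by (rule part1[OF N2])
  next
    fix \<epsilon> :: real assume e: "0 < \<epsilon> \<and> \<epsilon> < 1"
    show "\<exists>\<delta>::real. \<delta> > 0 \<and>
              Limsup at_top (\<lambda>R::real. emeasure (muA ns) (Bplus ns R)
                                     / emeasure (muA ns) (Bplus_delta ns R \<delta>))
                \<le> ennreal (min (1 + \<epsilon>) (1 / (1 - \<epsilon>)))"
      using part2[OF N2, of \<epsilon>] e by (intro exI[of _ "1/2"]) auto
  qed
qed

end
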